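(* Let $E=B\times\Gamma$ be a compact graph bundle (with projection $p=\mathrm{pr}_1$) and $M\subseteq E$ a closed set with $\operatorname{End}(M)=\emptyset$. (a) If $U$ is an open ball in $B$ with $U\subseteq\mathcal R_B(M)$, then there are an open ball $V\subseteq U$ and a ramification point $q$ of $\Gamma$ such that $V\times\{q\}\subseteq\mathcal R_E(M)$. (b) Let $q$ be a ramification point of $\Gamma$ of order $N$ and $V$ an open ball in $B$ with $V\times\{q\}\subseteq\mathcal R_E(M)$. Let $\Sigma_N\subseteq\Gamma$ be an open $N$-star with central point $q$ which is an open neighbourhood of $q$ in $\Gamma$. Then there are a full sub-star $\Sigma_k$ of $\Sigma_N$ with $k\ge3$ and an open ball $W\subseteq V$ in $B$ such that $(W\times\Sigma_N)\cap M=W\times\Sigma_k$.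
   Context: $B$ compact metric, $\Gamma$ a graph (nonempty compact metric space that is a finite union of arcs pairwise disjoint or meeting only at end-points); ramification points of $\Gamma$ have order $\ge3$. $M_b=M\cap(\{b\}\times\Gamma)$. Open $n$-star $\Sigma_n$: the $n$-star $\{z\in\mathbb C:z^n\in[0,1]\}$ (or homeomorphic copy) minus its $n$ end-points. For a closed subset $Z$ of a graph, $x\in Z$ is an end-point of $Z$ unless some $Z$-open neighbourhood of $x$ is homeomorphic to $\Sigma_k$, $k\ge2$, with $x$ going to the centre; $\operatorname{End}(M)=\bigcup_b\operatorname{End}(M_b)$. A ramification point of a subset $G$ of a graph is a $g\in G$ with a $G$-open neighbourhood homeomorphic to an open $r$-star, $r\ge3$, with centre $g$. $\mathcal R_B(M)=\{b\in B:M_b\text{ has a ramification point}\}$, $\mathcal R_E(M)=\{\gamma\in E:\gamma\text{ is a ramification point of }M_{p(\gamma)}\}$. Full sub-star: for $N\ge n\ge2$, an open star $\Sigma_n\subseteq\Sigma_N$ with the same centre that is the union of $n$ of the $N$ half-closed branches of $\Sigma_N$. *)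

theory Defs
  imports "HOL-Analysis.Analysis"
begin

definition is_graph :: "'g::metric_space set \<Rightarrow> bool" where
  "is_graph \<Gamma> \<longleftrightarrow> \<Gamma> \<noteq> {} \<and> compact \<Gamma> \<and>
     (\<exists>A :: (real \<Rightarrow> 'g) set. finite A \<and> (\<forall>g\<in>A. arc g) \<and> \<Gamma> = \<Union>(path_image ` A) \<and>
        (\<forall>g\<in>A. \<forall>g'\<in>A. g \<noteq> g' \<longrightarrow>
           path_image g \<inter> path_image g' \<subseteq> {pathstart g, pathfinish g} \<inter> {pathstart g', pathfinish g'}))"

text \<open>The closed n-star in the complex plane, the open n-star (closed star minus its n end-points),
and its j-th half-closed branch (j < n).\<close>
definition closed_star :: "nat \<Rightarrow> complex set" where
  "closed_star n = {z. z ^ n \<in> complex_of_real ` {0..1}}"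

definition open_star :: "nat \<Rightarrow> complex set" where
  "open_star n = closed_star n - {z. z ^ n = 1}"

definition star_branch :: "nat \<Rightarrow> nat \<Rightarrow> complex set" where
  "star_branch n j = {complex_of_real t * exp (2 * of_real pi * \<i> * of_nat j / of_nat n) | t. 0 \<le> t \<and> t < 1}"

definition star_point :: "'g::topological_space set \<Rightarrow> nat \<Rightarrow> 'g \<Rightarrow> bool" where
  "star_point Z k x \<longleftrightarrow> (\<exists>U (f :: 'g \<Rightarrow> complex) g. openin (top_of_set Z) U \<and> x \<in> U \<and>
       homeomorphism U (open_star k) f g \<and> f x = 0)"

definition end_point :: "'g::topological_space set \<Rightarrow> 'g \<Rightarrow> bool" where
  "end_point Z x \<longleftrightarrow> x \<in> Z \<and> \<not> (\<exists>k\<ge>2. star_point Z k x)"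

definition ramification_point :: "'g::topological_space set \<Rightarrow> 'g \<Rightarrow> bool" where
  "ramification_point G x \<longleftrightarrow> x \<in> G \<and> (\<exists>r\<ge>3. star_point G r x)"

definition fibre :: "('b \<times> 'g) set \<Rightarrow> 'b \<Rightarrow> 'g set" where
  "fibre M b = {y. (b, y) \<in> M}"

definition End_set :: "'b set \<Rightarrow> ('b \<times> 'g::topological_space) set \<Rightarrow> ('b \<times> 'g) set" where
  "End_set B M = {(b, y). b \<in> B \<and> end_point (fibre M b) y}"

definition R_B :: "'b set \<Rightarrow> ('b \<times> 'g::topological_space) set \<Rightarrow> 'b set" where
  "R_B B M = {b \<in> B. \<exists>y. ramification_point (fibre M b) y}"

definition R_E :: "'b set \<Rightarrow> 'g set \<Rightarrow> ('b \<times> 'g::topological_space) set \<Rightarrow> ('b \<times> 'g) set" where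
  "R_E B \<Gamma> M = {(b, y) \<in> B \<times> \<Gamma>. ramification_point (fibre M b) y}"

definition open_ball_in :: "'a::metric_space set \<Rightarrow> 'a set \<Rightarrow> bool" where
  "open_ball_in B V \<longleftrightarrow> (\<exists>c r. c \<in> B \<and> r > 0 \<and> V = ball c r \<inter> B)"

end

theory Submission
  imports Defs
begin

definition dir :: "nat \<Rightarrow> nat \<Rightarrow> complex" where
  "dir n j = exp(2 * of_real pi * \<i> * of_nat j / of_nat n)"

lemma dir_norm[simp]: "norm (dir n j) = 1"
  unfolding dir_def by (simp add: norm_exp_eq_Re)

lemma dir_nz[simp]: "dir n j \<noteq> 0"
  unfolding dir_def by simp

lemma dir_inj: "1 \<le> n \<Longrightarrow> i < n \<Longrightarrow> j < n \<Longrightarrow> dir n i = dir n j \<Longrightarrow> i = j"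
  unfolding dir_def using complex_root_unity_eq by auto

lemma dir_pow: "n \<noteq> 0 \<Longrightarrow> dir n j ^ n = 1"
  unfolding dir_def by (rule complex_root_unity)

lemma ray_eq:
  assumes "1 \<le> n" "i < n" "j < n" "0 < s" "0 \<le> t" "of_real s * dir n i = of_real t * dir n j"
  shows "s = t \<and> i = j"
proof -
  have "norm (of_real s * dir n i) = norm (of_real t * dir n j)" using assms(6) by simp
  hence st: "s = t" using assms(4,5) by (simp add: norm_mult)
  hence "dir n i = dir n j" using assms(6) assms(4) by simp
  thus ?thesis using st dir_inj assms by blast
qed

lemma star_branch_eq: "star_branch n j = (\<lambda>t. of_real t * dir n j) ` {0..<1}"
  unfolding star_branch_def dir_def by auto

lemma open_star_eq:
  assumes "1 \<le> n"
  shows "open_star n = {of_real t * dir n j | t j. 0 \<le> t \<and> t < 1 \<and> j < n}"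
proof
  show "{of_real t * dir n j | t j. 0 \<le> t \<and> t < 1 \<and> j < n} \<subseteq> open_star n"
  proof clarify
    fix t :: real and j assume t: "0 \<le> t" "t < 1" "j < n"
    have p: "(of_real t * dir n j) ^ n = of_real (t ^ n)"
      using assms by (simp add: power_mult_distrib dir_pow)
    have "t ^ n < 1" using t assms by (simp add: power_less_one_iff)
    moreover have "0 \<le> t ^ n" using t by simp
    ultimately show "of_real t * dir n j \<in> open_star n"
      unfolding open_star_def closed_star_def using p
      by (auto simp del: of_real_power)
  qed
next
  show "open_star n \<subseteq> {of_real t * dir n j | t j. 0 \<le> t \<and> t < 1 \<and> j < n}"
  proof
    fix z assume z: "z \<in> open_star n"
    then obtain c where c: "z ^ n = of_real c" "0 \<le> c" "c \<le> 1" "z ^ n \<noteq> 1"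
      unfolding open_star_def closed_star_def by auto
    show "z \<in> {of_real t * dir n j | t j. 0 \<le> t \<and> t < 1 \<and> j < n}"
    proof (cases "z = 0")
      case True
      then show ?thesis using assms by (intro CollectI exI[of _ 0]) auto
    next
      case False
      define t where "t = norm z"
      have tp: "t > 0" using False t_def by simp
      have "t ^ n = norm (z ^ n)" by (simp add: t_def norm_power)
      also have "\<dots> = c" using c by simp
      finally have tc: "t ^ n = c" .
      have "c \<noteq> 1" using c by auto
      hence "t ^ n < 1" using tc c by simp
      hence t1: "t < 1" using tp
        by (metis not_less one_le_power)
      define w where "w = z / of_real t"
      have "w ^ n = z ^ n / of_real (t ^ n)" by (simp add: w_def power_divide)
      also have "\<dots> = 1" using c tc tp zero_less_power[OF tp, of n] by simp
      finally have "w \<in> {z::complex. z^n = 1}" by simp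
      then obtain j where j: "j < n" "w = dir n j"
        using complex_roots_unity[OF assms] unfolding dir_def by auto
      have "z = of_real t * w" using tp by (simp add: w_def)
      then show ?thesis using j tp t1 by (intro CollectI exI[of _ t] exI[of _ j]) auto
    qed
  qed
qed
lemma gen:
  fixes \<gamma> :: "nat \<Rightarrow> real \<Rightarrow> 'x::metric_space"
  assumes d: "1 \<le> d"
    and cont: "\<And>i. i<d \<Longrightarrow> continuous_on {0..1} (\<gamma> i)"
    and inj: "\<And>i. i<d \<Longrightarrow> inj_on (\<gamma> i) {0..1}"
    and start: "\<And>i. i<d \<Longrightarrow> \<gamma> i 0 = p"
    and disj: "\<And>i k s t. i<d \<Longrightarrow> k<d \<Longrightarrow> i\<noteq>k \<Longrightarrow> s\<in>{0..1} \<Longrightarrow> t\<in>{0..1} \<Longrightarrow> \<gamma> i s = \<gamma> k t \<Longrightarrow> s = 0"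
  shows "\<exists>\<Phi> \<Psi>. homeomorphism (open_star d) (\<Union>i<d. \<gamma> i ` {0..<1}) \<Phi> \<Psi> \<and> \<Phi> 0 = p"
proof -
  define seg where "seg i = (\<lambda>t. of_real t * dir d i) ` {0..1}" for i
  define P where "P = (\<Union>i<d. seg i)"
  define idx where "idx z = (SOME i. i < d \<and> z = of_real (norm z) * dir d i)" for z
  define \<Phi> where "\<Phi> z = \<gamma> (idx z) (norm z)" for z
  have idx: "idx (of_real t * dir d i) = i" if "i<d" "0 < t" for i t
  proof -
    have ex: "\<exists>i'. i' < d \<and> of_real t * dir d i = of_real (norm (of_real t * dir d i)) * dir d i'"
      using that by (intro exI[of _ i]) (simp add: norm_mult)
    have "idx (of_real t * dir d i) < d \<and> of_real t * dir d i = of_real (norm (of_real t * dir d i)) * dir d (idx (of_real t * dir d i))"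
      unfolding idx_def by (rule someI_ex[OF ex])
    then show ?thesis using ray_eq[OF d that(1) _ that(2), of "idx (of_real t * dir d i)" "norm (of_real t * dir d i)"] that
      by (simp add: norm_mult)
  qed
  have idx0: "idx 0 < d"
  proof -
    have ex: "\<exists>i'. i' < d \<and> (0::complex) = of_real (norm (0::complex)) * dir d i'"
      using d by (intro exI[of _ 0]) simp
    show ?thesis unfolding idx_def using someI_ex[OF ex] by blast
  qed
  have \<Phi>_seg: "\<Phi> (of_real t * dir d i) = \<gamma> i t" if "i<d" "t\<in>{0..1}" for i t
  proof (cases "t = 0")
    case True
    then show ?thesis using idx0 start that unfolding \<Phi>_def by simp
  next
    case False
    then have "0 < t" using that by auto
    then show ?thesis using idx[OF that(1)] unfolding \<Phi>_def by (simp add: norm_mult)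
  qed
  have cseg: "compact (seg i)" for i
    unfolding seg_def by (intro compact_continuous_image continuous_intros) auto
  have contseg: "continuous_on (seg i) \<Phi>" if "i < d" for i
  proof -
    have "continuous_on (seg i) (\<lambda>z. \<gamma> i (norm z))"
      by (rule continuous_on_compose2[OF cont[OF that] continuous_on_norm_id])
         (auto simp: seg_def norm_mult)
    then show ?thesis
      by (rule continuous_on_cong[THEN iffD1, rotated 2]) (auto simp: seg_def \<Phi>_seg that norm_mult)
  qed
  have contP: "continuous_on P \<Phi>"
    unfolding P_def by (rule continuous_on_closed_Union) (auto intro: contseg compact_imp_closed cseg)
  have injP: "inj_on \<Phi> P"
  proof (rule inj_onI)
    fix z w assume "z \<in> P" "w \<in> P" and eq: "\<Phi> z = \<Phi> w"
    then obtain i k s t where z: "i<d" "s\<in>{0..1}" "z = of_real s * dir d i"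
       and w: "k<d" "t\<in>{0..1}" "w = of_real t * dir d k"
      unfolding P_def seg_def by auto
    have g: "\<gamma> i s = \<gamma> k t" using eq z w \<Phi>_seg by simp
    show "z = w"
    proof (cases "i = k")
      case True
      then show ?thesis using g inj z w by (metis inj_on_def)
    next
      case False
      then have "s = 0" "t = 0" using disj[OF z(1) w(1) False z(2) w(2) g]
          disj[OF w(1) z(1) _ w(2) z(2) g[symmetric]] by auto
      then show ?thesis using z w by simp
    qed
  qed
  have cP: "compact P" unfolding P_def using cseg by auto
  obtain \<Psi> where hom: "homeomorphism P (\<Phi> ` P) \<Phi> \<Psi>"
    using homeomorphism_compact[OF cP contP refl injP] by blast
  have sub: "open_star d \<subseteq> P"
    unfolding open_star_eq[OF d] P_def seg_def by auto
  have img: "\<Phi> ` open_star d = (\<Union>i<d. \<gamma> i ` {0..<1})"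
  proof
    show "\<Phi> ` open_star d \<subseteq> (\<Union>i<d. \<gamma> i ` {0..<1})"
      unfolding open_star_eq[OF d] using \<Phi>_seg by auto
    show "(\<Union>i<d. \<gamma> i ` {0..<1}) \<subseteq> \<Phi> ` open_star d"
    proof clarify
      fix i t assume "i < d" "t \<in> {0..<(1::real)}"
      then have "\<gamma> i t = \<Phi> (of_real t * dir d i)" "of_real t * dir d i \<in> open_star d"
        using \<Phi>_seg unfolding open_star_eq[OF d] by auto
      then show "\<gamma> i t \<in> \<Phi> ` open_star d" by blast
    qed
  qed
  have "homeomorphism (open_star d) (\<Union>i<d. \<gamma> i ` {0..<1}) \<Phi> \<Psi>"
    by (rule homeomorphism_of_subsets[OF hom sub _ img]) (use img sub in auto)
  moreover have "\<Phi> 0 = p" using \<Phi>_seg[of 0 0] start[of 0] d by simp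
  ultimately show ?thesis by blast
qed

lemma inj_interval:
  fixes \<phi> :: "real \<Rightarrow> real"
  assumes "continuous_on {0..e} \<phi>" "inj_on \<phi> {0..e}" "0 \<le> e"
  shows "\<phi> ` {0..e} = closed_segment (\<phi> 0) (\<phi> e)"
  using continuous_injective_image_segment_1[of 0 e \<phi>] assms
  by (simp add: closed_segment_eq_real_ivl)

lemma branch_dir:
  assumes "w \<in> star_branch N j" "w \<noteq> 0"
  shows "w = of_real (norm w) * dir N j"
  using assms unfolding star_branch_eq by (auto simp: norm_mult)

lemma const_dir:
  assumes S: "connected S" "S \<noteq> {}" and F: "continuous_on S F" "\<And>s. s\<in>S \<Longrightarrow> F s \<noteq> 0"
    "F ` S \<subseteq> (\<Union>j\<in>J. star_branch N j)" and J: "finite J"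
  shows "\<exists>j\<in>J. \<forall>s\<in>S. F s = of_real (norm (F s)) * dir N j"
proof -
  define D where "D s = F s / of_real (norm (F s))" for s
  have FD: "F s = of_real (norm (F s)) * D s" if "s \<in> S" for s
    using F(2)[OF that] by (simp add: D_def)
  have Dj: "\<exists>j\<in>J. D s = dir N j" if "s \<in> S" for s
  proof -
    have "F s \<in> (\<Union>j\<in>J. star_branch N j)" using F(3) that by blast
    then obtain j where j: "j \<in> J" "F s \<in> star_branch N j" by blast
    have eq: "F s = of_real (norm (F s)) * dir N j" by (rule branch_dir[OF j(2) F(2)[OF that]])
    define c where "c = norm (F s)"
    have c0: "c \<noteq> 0" using F(2)[OF that] c_def by simp
    have "D s = (of_real c * dir N j) / of_real c" unfolding D_def c_def[symmetric]
      using eq[folded c_def] by simp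
    then have "D s = dir N j" using c0 by simp
    then show ?thesis using j by blast
  qed
  have cD: "continuous_on S D"
    unfolding D_def using F(2) by (intro continuous_intros F(1)) auto
  have "D ` S \<subseteq> dir N ` J" using Dj by auto
  then have "finite (D ` S)" using J finite_subset by blast
  then have "D constant_on S" by (rule continuous_finite_range_constant[OF S(1) cD])
  then obtain c where c: "\<And>s. s \<in> S \<Longrightarrow> D s = c" unfolding constant_on_def by blast
  obtain s0 where "s0 \<in> S" using S by blast
  then obtain j where "j \<in> J" "c = dir N j" using Dj c by metis
  then show ?thesis using FD c by auto
qed

lemma small_ball_open_star:
  assumes "openin (top_of_set (open_star r)) U" "0 \<in> U"
  obtains \<epsilon> where "0 < \<epsilon>" "\<epsilon> < 1" "\<And>i s. i < r \<Longrightarrow> s \<in> {0..\<epsilon>} \<Longrightarrow> of_real s * dir r i \<in> U"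
proof -
  obtain e where e: "e > 0" "ball 0 e \<inter> open_star r \<subseteq> U"
    using assms openin_contains_ball by metis
  define \<epsilon> where "\<epsilon> = min (e/2) (1/2)"
  have "of_real s * dir r i \<in> U" if "i < r" "s \<in> {0..\<epsilon>}" for i s
  proof -
    have r1: "1 \<le> r" using that by simp
    have "of_real s * dir r i \<in> open_star r"
      unfolding open_star_eq[OF r1] using that by (intro CollectI exI[of _ s] exI[of _ i]) (auto simp: \<epsilon>_def)
    moreover have "of_real s * dir r i \<in> ball 0 e" using that e unfolding \<epsilon>_def by (auto simp: norm_mult)
    ultimately show ?thesis using e by blast
  qed
  then show ?thesis using that[of \<epsilon>] e unfolding \<epsilon>_def by auto
qed

lemma emb:
  assumes N: "1 \<le> N" and J: "J \<subseteq> {..<N}"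
   and U: "openin (top_of_set (open_star r)) U" "0 \<in> U"
   and f: "continuous_on U f" "inj_on f U" "f 0 = 0" "f ` U \<subseteq> (\<Union>j\<in>J. star_branch N j)"
  shows "r \<le> card J"
proof -
  have fJ: "finite J" using J finite_subset by blast
  obtain \<epsilon> where \<epsilon>: "0<\<epsilon>" "\<epsilon><1" "\<And>i s. i<r \<Longrightarrow> s\<in>{0..\<epsilon>} \<Longrightarrow> of_real s * dir r i \<in> U"
    using small_ball_open_star[OF U] by blast
  define F where "F i s = f (of_real s * dir r i)" for i s
  have contF: "continuous_on {0..\<epsilon>} (F i)" if "i<r" for i
    unfolding F_def
    by (rule continuous_on_compose2[OF f(1), of _ "\<lambda>s. of_real s * dir r i"])
       (intro continuous_intros, use \<epsilon>(3)[OF that] in blast)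
  have injF: "of_real s * dir r i = of_real s' * dir r i'"
    if "F i s = F i' s'" "i<r" "i'<r" "s\<in>{0..\<epsilon>}" "s'\<in>{0..\<epsilon>}" for i i' s s'
    by (rule inj_onD[OF f(2)]) (use that \<epsilon>(3) in \<open>auto simp: F_def\<close>)
  have Fnz: "F i s \<noteq> 0" if "i<r" "s \<in> {0<..\<epsilon>}" for i s
  proof
    assume "F i s = 0"
    then have "F i s = F i 0" using f(3) F_def by simp
    then have "of_real s * dir r i = of_real 0 * dir r i"
      by (rule injF[OF _ that(1) that(1)]) (use that \<epsilon> in auto)
    then show False using that by simp
  qed
  have Fimg: "F i s \<in> (\<Union>j\<in>J. star_branch N j)" if "i<r" "s \<in> {0..\<epsilon>}" for i s
    using f(4) \<epsilon>(3)[OF that] unfolding F_def by blast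
  have dirs: "\<exists>j\<in>J. \<forall>s\<in>{0<..\<epsilon>}. F i s = of_real (norm (F i s)) * dir N j" if "i<r" for i
    by (rule const_dir[OF _ _ continuous_on_subset[OF contF[OF that]] Fnz[OF that] _ fJ])
       (use \<epsilon> Fimg[OF that] in auto)
  have "\<forall>i. \<exists>j. i<r \<longrightarrow> j \<in> J \<and> (\<forall>s\<in>{0<..\<epsilon>}. F i s = of_real (norm (F i s)) * dir N j)"
    using dirs by blast
  from choice[OF this] obtain jj where
    jj0: "\<forall>i. i<r \<longrightarrow> jj i \<in> J \<and> (\<forall>s\<in>{0<..\<epsilon>}. F i s = of_real (norm (F i s)) * dir N (jj i))"
    by blast
  have jj: "jj i \<in> J \<and> (\<forall>s\<in>{0<..\<epsilon>}. F i s = of_real (norm (F i s)) * dir N (jj i))" if "i<r" for i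
    using jj0 that by blast
  define \<rho> where "\<rho> i s = norm (F i s)" for i s
  have F0: "F i 0 = 0" for i using f(3) F_def by simp
  have F\<rho>: "F i s = of_real (\<rho> i s) * dir N (jj i)" if "i<r" "s\<in>{0..\<epsilon>}" for i s
  proof (cases "s = 0")
    case True then show ?thesis using F0 \<rho>_def by simp
  next
    case False then show ?thesis using jj[OF that(1)] that(2) \<rho>_def by auto
  qed
  have \<rho>0: "\<rho> i 0 = 0" for i using F0 \<rho>_def by simp
  have inj\<rho>: "inj_on (\<rho> i) {0..\<epsilon>}" if "i<r" for i
  proof (rule inj_onI)
    fix s s' assume s: "s \<in> {0..\<epsilon>}" "s' \<in> {0..\<epsilon>}" "\<rho> i s = \<rho> i s'"
    then have "F i s = F i s'" using F\<rho>[OF that] by simp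
    then have "of_real s * dir r i = of_real s' * dir r i" using injF that s by blast
    then show "s = s'" by simp
  qed
  have cont\<rho>: "continuous_on {0..\<epsilon>} (\<rho> i)" if "i<r" for i
    unfolding \<rho>_def by (intro continuous_intros contF that)
  have img: "\<rho> i ` {0..\<epsilon>} = closed_segment 0 (\<rho> i \<epsilon>)" if "i<r" for i
    using inj_interval[OF cont\<rho>[OF that] inj\<rho>[OF that]] \<epsilon> \<rho>0 by simp
  have pos: "\<rho> i \<epsilon> > 0" if "i<r" for i
  proof -
    have "\<rho> i \<epsilon> \<noteq> \<rho> i 0"
    proof
      assume "\<rho> i \<epsilon> = \<rho> i 0"
      then have "\<epsilon> = 0" by (rule inj_onD[OF inj\<rho>[OF that]]) (use \<epsilon> in auto)
      then show False using \<epsilon> by simp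
    qed
    moreover have "\<rho> i \<epsilon> \<ge> 0" unfolding \<rho>_def by simp
    ultimately show ?thesis using \<rho>0 by simp
  qed
  have "inj_on jj {..<r}"
  proof (rule inj_onI)
    fix i k assume ik: "i \<in> {..<r}" "k \<in> {..<r}" "jj i = jj k"
    show "i = k"
    proof (rule ccontr)
      assume ne: "i \<noteq> k"
      define m where "m = min (\<rho> i \<epsilon>) (\<rho> k \<epsilon>) / 2"
      have mpos: "m > 0" using pos ik unfolding m_def by auto
      have pi: "\<rho> i \<epsilon> > 0" "\<rho> k \<epsilon> > 0" using pos ik by auto
      have "m \<in> \<rho> i ` {0..\<epsilon>}" "m \<in> \<rho> k ` {0..\<epsilon>}"
        using img[of i] img[of k] pi ik by (auto simp: closed_segment_eq_real_ivl m_def)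
      then obtain s s' where s: "s\<in>{0..\<epsilon>}" "\<rho> i s = m" "s'\<in>{0..\<epsilon>}" "\<rho> k s' = m" by auto
      have "s \<noteq> 0" using s \<rho>0 mpos by auto
      then have sp: "s > 0" using s by auto
      have "F i s = F k s'" using F\<rho> s ik by simp
      then have "of_real s * dir r i = of_real s' * dir r k" using injF ik s by blast
      then have "i = k" using ray_eq[of r i k s s'] sp s ik by auto
      then show False using ne by simp
    qed
  qed
  moreover have "jj ` {..<r} \<subseteq> J" using jj by auto
  ultimately show "r \<le> card J" using card_inj_on_le[OF _ _ fJ, of jj "{..<r}"] by simp
qed

lemma emb2:
  assumes N: "1 \<le> N" "j < N" and k: "2 \<le> k"
   and U: "openin (top_of_set (open_star k)) U" "0 \<in> U"
   and F: "continuous_on U F" "inj_on F U" "F 0 = of_real t0 * dir N j" "0 < t0"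
     "\<And>z. z \<in> U \<Longrightarrow> \<exists>t>0. F z = of_real t * dir N j"
  shows "\<exists>\<delta>>0. \<forall>t. \<bar>t - t0\<bar> < \<delta> \<longrightarrow> of_real t * dir N j \<in> F ` U"
proof -
  obtain \<epsilon> where \<epsilon>: "0<\<epsilon>" "\<epsilon><1" "\<And>i s. i<k \<Longrightarrow> s\<in>{0..\<epsilon>} \<Longrightarrow> of_real s * dir k i \<in> U"
    using small_ball_open_star[OF U] by blast
  define G where "G i s = F (of_real s * dir k i)" for i s
  define \<rho> where "\<rho> i s = norm (G i s)" for i s
  have contG: "continuous_on {0..\<epsilon>} (G i)" if "i<k" for i
    unfolding G_def
    by (rule continuous_on_compose2[OF F(1), of _ "\<lambda>s. of_real s * dir k i"])
       (intro continuous_intros, use \<epsilon>(3)[OF that] in blast)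
  have injG: "of_real s * dir k i = of_real s' * dir k i'"
    if "G i s = G i' s'" "i<k" "i'<k" "s\<in>{0..\<epsilon>}" "s'\<in>{0..\<epsilon>}" for i i' s s'
    by (rule inj_onD[OF F(2)]) (use that \<epsilon>(3) in \<open>auto simp: G_def\<close>)
  have G\<rho>: "G i s = of_real (\<rho> i s) * dir N j" if ik: "i<k" "s\<in>{0..\<epsilon>}" for i s
  proof -
    obtain t where "t > 0" "G i s = of_real t * dir N j" using F(5)[OF \<epsilon>(3)[OF ik]] G_def by auto
    then show ?thesis unfolding \<rho>_def by (simp add: norm_mult)
  qed
  have \<rho>0: "\<rho> i 0 = t0" for i using F(3,4) \<rho>_def G_def by (simp add: norm_mult)
  have inj\<rho>: "inj_on (\<rho> i) {0..\<epsilon>}" if "i<k" for i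
  proof (rule inj_onI)
    fix s s' assume s: "s \<in> {0..\<epsilon>}" "s' \<in> {0..\<epsilon>}" "\<rho> i s = \<rho> i s'"
    then have "G i s = G i s'" using G\<rho>[OF that] by simp
    then have "of_real s * dir k i = of_real s' * dir k i" using injG that s by blast
    then show "s = s'" by simp
  qed
  have cont\<rho>: "continuous_on {0..\<epsilon>} (\<rho> i)" if "i<k" for i
    unfolding \<rho>_def by (intro continuous_intros contG that)
  have img: "\<rho> i ` {0..\<epsilon>} = closed_segment t0 (\<rho> i \<epsilon>)" if "i<k" for i
    using inj_interval[OF cont\<rho>[OF that] inj\<rho>[OF that]] \<epsilon> \<rho>0 by simp
  have ne: "\<rho> i \<epsilon> \<noteq> t0" if "i<k" for i
  proof
    assume "\<rho> i \<epsilon> = t0"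
    then have "\<rho> i \<epsilon> = \<rho> i 0" using \<rho>0 by simp
    then have "\<epsilon> = 0" by (rule inj_onD[OF inj\<rho>[OF that]]) (use \<epsilon> in auto)
    then show False using \<epsilon> by simp
  qed
  have k0: "0 < k" "1 < k" using k by auto
  have common: "m = t0" if mm: "m \<in> \<rho> 0 ` {0..\<epsilon>}" "m \<in> \<rho> 1 ` {0..\<epsilon>}" for m
  proof -
    obtain s s' where s: "s\<in>{0..\<epsilon>}" "\<rho> 0 s = m" "s'\<in>{0..\<epsilon>}" "\<rho> 1 s' = m" using mm by auto
    have "G 0 s = G 1 s'" using G\<rho> s k0 by simp
    then have eq: "of_real s * dir k 0 = of_real s' * dir k 1" using injG k0 s by blast
    have "s = 0"
    proof (rule ccontr)
      assume "s \<noteq> 0" then have "s > 0" using s by auto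
      then have "(0::nat) = 1" using ray_eq[of k 0 1 s s'] eq s k0 by auto
      then show False by simp
    qed
    then show ?thesis using s \<rho>0 by simp
  qed
  define a where "a = \<rho> 0 \<epsilon>"
  define b where "b = \<rho> 1 \<epsilon>"
  have ia: "\<rho> 0 ` {0..\<epsilon>} = closed_segment t0 a" using img k0 a_def by simp
  have ib: "\<rho> 1 ` {0..\<epsilon>} = closed_segment t0 b" using img k0 b_def by simp
  have "a \<noteq> t0" "b \<noteq> t0" using ne k0 a_def b_def by auto
  have sides: "(a < t0 \<and> t0 < b) \<or> (b < t0 \<and> t0 < a)"
  proof (rule ccontr)
    assume "\<not> ?thesis"
    then have "(t0 < a \<and> t0 < b) \<or> (a < t0 \<and> b < t0)" using \<open>a \<noteq> t0\<close> \<open>b \<noteq> t0\<close> by linarith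
    then obtain m where "m \<noteq> t0" "m \<in> closed_segment t0 a" "m \<in> closed_segment t0 b"
    proof
      assume h: "t0 < a \<and> t0 < b"
      define m where "m = t0 + min (a - t0) (b - t0) / 2"
      have m: "t0 < m" "m \<le> a" "m \<le> b" using h unfolding m_def min_def by (auto simp: field_simps)
      show thesis
        by (rule that[of m]) (use h m in \<open>auto simp: closed_segment_eq_real_ivl\<close>)
    next
      assume h: "a < t0 \<and> b < t0"
      define m where "m = t0 - min (t0 - a) (t0 - b) / 2"
      have m: "m < t0" "a \<le> m" "b \<le> m" using h unfolding m_def min_def by (auto simp: field_simps)
      show thesis
        by (rule that[of m]) (use h m in \<open>auto simp: closed_segment_eq_real_ivl\<close>)
    qed
    then show False using common ia ib by blast
  qed
  define \<delta> where "\<delta> = min \<bar>a - t0\<bar> \<bar>b - t0\<bar>"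
  have "\<delta> > 0" using \<open>a \<noteq> t0\<close> \<open>b \<noteq> t0\<close> \<delta>_def by simp
  moreover have "of_real t * dir N j \<in> F ` U" if "\<bar>t - t0\<bar> < \<delta>" for t
  proof -
    have hit: "of_real (\<rho> i s) * dir N j \<in> F ` U" if "i<k" "s\<in>{0..\<epsilon>}" for i s
    proof -
      have "F (of_real s * dir k i) = of_real (\<rho> i s) * dir N j" using G\<rho>[OF that] G_def by simp
      then show ?thesis using \<epsilon>(3)[OF that] by (metis image_eqI)
    qed
    have "t \<in> closed_segment t0 a \<or> t \<in> closed_segment t0 b"
      using sides that unfolding \<delta>_def closed_segment_eq_real_ivl by (cases "a < t0") auto
    then show ?thesis
    proof
      assume "t \<in> closed_segment t0 a"
      then obtain s where "s\<in>{0..\<epsilon>}" "\<rho> 0 s = t" using ia by (metis imageE)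
      then show ?thesis using hit[of 0 s] k0 by simp
    next
      assume "t \<in> closed_segment t0 b"
      then obtain s where "s\<in>{0..\<epsilon>}" "\<rho> 1 s = t" using ib by (metis imageE)
      then show ?thesis using hit[of 1 s] k0 by simp
    qed
  qed
  ultimately show ?thesis by blast
qed

lemma zero_open_star: "1 \<le> d \<Longrightarrow> 0 \<in> open_star d"
  unfolding open_star_eq by (intro CollectI exI[of _ 0] exI[of _ 0]) auto

locale graphA =
  fixes \<Gamma> :: "'g::metric_space set" and A :: "(real \<Rightarrow> 'g) set"
  assumes finA: "finite A" and arcs: "\<And>g. g \<in> A \<Longrightarrow> arc g"
    and Geq: "\<Gamma> = \<Union>(path_image ` A)"
    and inter: "\<And>g g'. g \<in> A \<Longrightarrow> g' \<in> A \<Longrightarrow> g \<noteq> g' \<Longrightarrow>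
        path_image g \<inter> path_image g' \<subseteq> {pathstart g, pathfinish g} \<inter> {pathstart g', pathfinish g'}"
begin

lemma closed_Gamma_part: "closed (\<Union>(path_image ` A'))" if "A' \<subseteq> A" for A'
proof -
  have "finite A'" using finA that finite_subset by blast
  moreover have "compact (path_image g)" if "g \<in> A'" for g
    using arcs \<open>A' \<subseteq> A\<close> that by (intro compact_path_image arc_imp_path) auto
  ultimately show ?thesis by (intro compact_imp_closed compact_Union) auto
qed

lemma vertex_star:
  assumes y: "y \<in> pathstart ` A \<union> pathfinish ` A"
  shows "\<exists>S h h'. openin (top_of_set \<Gamma>) S \<and> y \<in> S \<and> 1 \<le> card {g\<in>A. pathstart g = y \<or> pathfinish g = y} \<and>
     homeomorphism S (open_star (card {g\<in>A. pathstart g = y \<or> pathfinish g = y})) h h' \<and> h y = 0"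
proof -
  define Ay where "Ay = {g\<in>A. pathstart g = y \<or> pathfinish g = y}"
  have finAy: "finite Ay" using finA Ay_def by simp
  have "Ay \<noteq> {}" using y Ay_def by auto
  define d where "d = card Ay"
  have d1: "1 \<le> d" using finAy \<open>Ay \<noteq> {}\<close> d_def by (simp add: Suc_le_eq card_gt_0_iff)
  obtain e where e: "bij_betw e {0..<d} Ay" using ex_bij_betw_nat_finite[OF finAy] d_def by blast
  have eA: "e i \<in> Ay" if "i < d" for i using e that unfolding bij_betw_def by auto
  have einj: "i = k" if "i < d" "k < d" "e i = e k" for i k
    using e that unfolding bij_betw_def inj_on_def by auto
  have esurj: "\<exists>i<d. e i = g" if "g \<in> Ay" for g
    using e that unfolding bij_betw_def by (metis atLeastLessThan_iff imageE)
  define gg where "gg i = (if pathstart (e i) = y then e i else reversepath (e i))" for i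
  have gg_arc: "arc (gg i)" if "i<d" for i
    using arcs eA[OF that] Ay_def gg_def arc_reversepath by auto
  have gg_img: "path_image (gg i) = path_image (e i)" for i
    by (simp add: gg_def)
  have gg0: "gg i 0 = y" if "i<d" for i
    using eA[OF that] unfolding Ay_def gg_def pathstart_def pathfinish_def reversepath_def by auto
  have ggends: "{pathstart (e i), pathfinish (e i)} = {y, gg i 1}" if "i<d" for i
    using eA[OF that] unfolding Ay_def gg_def pathstart_def pathfinish_def reversepath_def by auto
  have gg_cont: "continuous_on {0..1} (gg i)" if "i<d" for i
    using gg_arc[OF that] by (simp add: arc_def path_def)
  have gg_inj: "inj_on (gg i) {0..1}" if "i<d" for i
    using gg_arc[OF that] by (simp add: arc_def)
  have y_notin: "y \<notin> path_image g'" if "g' \<in> A" "g' \<notin> Ay" for g'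
  proof
    assume yg': "y \<in> path_image g'"
    obtain g0 where g0: "g0 \<in> Ay" using \<open>Ay \<noteq> {}\<close> by blast
    have "y \<in> path_image g0" using g0 unfolding Ay_def
      by (auto simp: pathstart_in_path_image pathfinish_in_path_image)
    moreover have "g0 \<noteq> g'" using g0 that by auto
    ultimately have "y \<in> {pathstart g', pathfinish g'}"
      using inter[of g0 g'] g0 that yg' unfolding Ay_def by blast
    then show False using that Ay_def by auto
  qed
  have other: "x = y" if "i<d" "g' \<in> A" "g' \<noteq> e i" "x \<in> path_image (e i)" "x \<in> path_image g'"
     "x \<noteq> gg i 1" for i g' x
  proof -
    have "x \<in> {pathstart (e i), pathfinish (e i)}"
      using inter[of "e i" g'] eA[OF that(1)] that Ay_def by blast
    then show ?thesis using ggends[OF that(1)] that(6) by blast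
  qed
  define \<gamma> where "\<gamma> i t = gg i (t/2)" for i t
  have half: "t/2 \<in> {0..1}" if "t \<in> {0..1}" for t :: real using that by auto
  have gen_ex: "\<exists>\<Phi> \<Psi>. homeomorphism (open_star d) (\<Union>i<d. \<gamma> i ` {0..<1}) \<Phi> \<Psi> \<and> \<Phi> 0 = y"
  proof (rule gen[OF d1])
    show "continuous_on {0..1} (\<gamma> i)" if "i<d" for i
      unfolding \<gamma>_def
      by (rule continuous_on_compose2[OF gg_cont[OF that], of _ "\<lambda>t. t/2"])
         (auto intro!: continuous_on_divide continuous_on_id continuous_on_const)
    show "inj_on (\<gamma> i) {0..1}" if "i<d" for i
    proof (rule inj_onI)
      fix s t :: real assume st: "s \<in> {0..1}" "t \<in> {0..1}" "\<gamma> i s = \<gamma> i t"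
      then have "s/2 = t/2" using inj_onD[OF gg_inj[OF that]] half unfolding \<gamma>_def by blast
      then show "s = t" by simp
    qed
    show "\<gamma> i 0 = y" if "i<d" for i using gg0[OF that] \<gamma>_def by simp
    show "s = 0" if ik: "i<d" "k<d" "i\<noteq>k" "s\<in>{0..1}" "t\<in>{0..1}" "\<gamma> i s = \<gamma> k t" for i k s t
    proof -
      define x where "x = gg i (s/2)"
      have xi: "x \<in> path_image (e i)" using gg_img[of i] half[OF ik(4)] x_def
        by (auto simp: path_image_def)
      have xk: "x \<in> path_image (e k)" using gg_img[of k] half[OF ik(5)] x_def ik(6) \<gamma>_def
        by (auto simp: path_image_def)
      have ne: "e k \<noteq> e i" using einj ik by metis
      have "x \<noteq> gg i 1"
      proof
        assume a1: "x = gg i 1"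
        have "s/2 = 1"
          by (intro inj_onD[OF gg_inj[OF ik(1)]]) (use a1 x_def half[OF ik(4)] in auto)
        then show False using ik(4) by simp
      qed
      then have "x = y" using other[OF ik(1) _ ne xi xk] eA[OF ik(2)] Ay_def by blast
      then have eq0: "gg i (s/2) = gg i 0" using gg0[OF ik(1)] x_def by simp
      have "s/2 = 0"
          by (intro inj_onD[OF gg_inj[OF ik(1)]]) (use eq0 half[OF ik(4)] in auto)
      then show "s = 0" by simp
    qed
  qed
  then obtain \<Phi> \<Psi> where hom: "homeomorphism (open_star d) (\<Union>i<d. \<gamma> i ` {0..<1}) \<Phi> \<Psi>" and \<Phi>0: "\<Phi> 0 = y"
    by blast
  define S where "S = (\<Union>i<d. \<gamma> i ` {0..<1})"
  define K where "K = \<Union>(path_image ` (A - Ay)) \<union> (\<Union>i<d. gg i ` {1/2..1})"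
  have cK: "closed K"
  proof -
    have "closed (\<Union>(path_image ` (A - Ay)))" by (rule closed_Gamma_part) auto
    moreover have "compact (gg i ` {1/2..1})" if "i<d" for i
      by (rule compact_continuous_image[OF continuous_on_subset[OF gg_cont[OF that]]]) auto
    ultimately show ?thesis unfolding K_def
      by (intro closed_Un[OF _ compact_imp_closed]) (auto intro!: compact_UN)
  qed
  have SK: "S = \<Gamma> - K"
  proof
    show "S \<subseteq> \<Gamma> - K"
    proof
      fix x assume "x \<in> S"
      then obtain i t where it: "i<d" "t \<in> {0..<1}" "x = gg i (t/2)" unfolding S_def \<gamma>_def by auto
      have t2: "t/2 \<in> {0..1}" "t/2 \<noteq> 1" using it by auto
      have xi: "x \<in> path_image (e i)" using gg_img[of i] t2 it by (auto simp: path_image_def)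
      have xG: "x \<in> \<Gamma>" using xi eA[OF it(1)] Geq Ay_def by auto
      have x1: "x \<noteq> gg i 1"
      proof
        assume a1: "x = gg i 1"
        have "t/2 = 1"
          by (intro inj_onD[OF gg_inj[OF it(1)]]) (use a1 it(3) t2 it in auto)
        then show False using t2 by simp
      qed
      have n1: "x \<notin> path_image g'" if "g' \<in> A - Ay" for g'
      proof
        assume "x \<in> path_image g'"
        moreover have "g' \<noteq> e i" using that eA[OF it(1)] by auto
        ultimately have "x = y" using other[OF it(1) _ _ xi _ x1] that by blast
        then show False using y_notin that \<open>x \<in> path_image g'\<close> by blast
      qed
      have n2: "x \<notin> gg k ` {1/2..1}" if "k<d" for k
      proof
        assume "x \<in> gg k ` {1/2..1}"
        then obtain v where v: "v \<in> {1/2..1}" "x = gg k v" by auto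
        show False
        proof (cases "k = i")
          case True
          have "t/2 = v"
          by (intro inj_onD[OF gg_inj[OF it(1)]]) (use True t2 it v in auto)
          then show False using it v by auto
        next
          case False
          have ne: "e k \<noteq> e i" using einj it(1) that False by metis
          have xk: "x \<in> path_image (e k)" using gg_img[of k] v by (auto simp: path_image_def)
          have "x = y" using other[OF it(1) _ ne xi xk x1] eA[OF that] Ay_def by blast
          then have eq0: "gg k v = gg k 0" using gg0[OF that] v by simp
          have "v = 0"
          by (intro inj_onD[OF gg_inj[OF that]]) (use eq0 v in auto)
          then show False using v by simp
        qed
      qed
      show "x \<in> \<Gamma> - K" using xG n1 n2 unfolding K_def by blast
    qed
  next
    show "\<Gamma> - K \<subseteq> S"
    proof
      fix x assume x: "x \<in> \<Gamma> - K"
      then obtain g where g: "g \<in> A" "x \<in> path_image g" using Geq by auto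
      have "g \<in> Ay" using g x unfolding K_def by blast
      then obtain i where i: "i<d" "e i = g" using esurj by blast
      have "x \<in> path_image (gg i)" using g i gg_img[of i] by simp
      then obtain u where u: "u \<in> {0..1}" "x = gg i u" unfolding path_image_def by blast
      have "u \<notin> {1/2..1}" using x u i unfolding K_def by blast
      then have "u < 1/2" using u by auto
      then have "2*u \<in> {0..<1}" "x = \<gamma> i (2*u)" using u unfolding \<gamma>_def by auto
      then show "x \<in> S" unfolding S_def using i by blast
    qed
  qed
  have oS: "openin (top_of_set \<Gamma>) S"
  proof -
    have "S = \<Gamma> \<inter> (- K)" using SK by blast
    then show ?thesis using openin_open_Int[OF open_Compl[OF cK]] by simp
  qed
  have y0: "0 \<in> open_star d" by (rule zero_open_star[OF d1])
  have "\<Phi> 0 \<in> \<Phi> ` open_star d" using y0 by (rule imageI)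
  then have yS: "y \<in> S" unfolding S_def homeomorphism_image1[OF hom] \<Phi>0 .
  have hom': "homeomorphism S (open_star d) \<Psi> \<Phi>" unfolding S_def by (rule homeomorphism_symD[OF hom])
  have "\<Psi> y = 0" using homeomorphism_apply1[OF hom y0] \<Phi>0 by simp
  then show ?thesis using oS yS d1 hom' unfolding d_def Ay_def by blast
qed

end

definition sp :: "real \<Rightarrow> real \<Rightarrow> (real \<Rightarrow> 'a) \<Rightarrow> real \<Rightarrow> 'a" where
  "sp u v g = (\<lambda>x. g((v - u) * x + u))"

lemma pi_subpath: "path_image (sp u v g) = g ` closed_segment u v"
  by (auto simp add: closed_segment_real_eq path_image_def sp_def)

lemma sp_start[simp]: "pathstart (sp u v g) = g u" and sp_finish[simp]: "pathfinish (sp u v g) = g v"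
  by (simp_all add: pathstart_def pathfinish_def sp_def)

lemma arc_sp:
  fixes g :: "real \<Rightarrow> 'a::topological_space"
  assumes "arc g" "u \<in> {0..1}" "v \<in> {0..1}" "u \<noteq> v"
  shows "arc (sp u v g)"
proof -
  have m: "(v - u) * x + u \<in> {0..1}" if "x \<in> {0..1}" for x
  proof -
    have "(v - u) * x + u = (1 - x) * u + x * v" by (simp add: algebra_simps)
    moreover have "0 \<le> (1 - x) * u + x * v" using that assms by auto
    moreover have "(1 - x) * u + x * v \<le> (1 - x) * 1 + x * 1"
      using that assms by (intro add_mono mult_left_mono) auto
    ultimately show ?thesis by auto
  qed
  have c: "continuous_on {0..1} g" "inj_on g {0..1}" using assms(1) by (auto simp: arc_def path_def)
  have "continuous_on {0..1} (sp u v g)"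
    unfolding sp_def
    by (rule continuous_on_compose2[OF c(1), of _ "\<lambda>x. (v - u) * x + u"])
       (auto intro!: continuous_on_add continuous_on_mult continuous_on_const continuous_on_id m)
  moreover have "inj_on (sp u v g) {0..1}"
  proof (rule inj_onI)
    fix x y assume xy: "x \<in> {0..1}" "y \<in> {0..1}" "sp u v g x = sp u v g y"
    then have "(v - u) * x + u = (v - u) * y + u" using inj_onD[OF c(2)] m unfolding sp_def by blast
    then show "x = y" using assms(4) by simp
  qed
  ultimately show ?thesis by (simp add: arc_def path_def)
qed

lemma (in graphA) interior_star:
  assumes y: "y \<in> \<Gamma>" "y \<notin> pathstart ` A \<union> pathfinish ` A"
  shows "\<exists>S h h'. openin (top_of_set \<Gamma>) S \<and> y \<in> S \<and> homeomorphism S (open_star 2) h h' \<and> h y = 0"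
proof -
  obtain g where g: "g \<in> A" "y \<in> path_image g" using y(1) Geq by auto
  obtain s where s: "s \<in> {0..1}" "y = g s" using g(2) unfolding path_image_def by auto
  have "pathstart g \<noteq> y" "pathfinish g \<noteq> y" using y(2) g(1) by auto
  then have s01: "0 < s" "s < 1" using s unfolding pathstart_def pathfinish_def
    by (metis atLeastAtMost_iff order_le_less)+
  have garc: "arc g" using arcs g by simp
  have gi: "inj_on g {0..1}" using garc by (simp add: arc_def)
  define g1 where "g1 = sp s 0 g"
  define g2 where "g2 = sp s 1 g"
  have pi1: "path_image g1 = g ` {0..s}"
    unfolding g1_def pi_subpath using s01 by (simp add: closed_segment_eq_real_ivl)
  have pi2: "path_image g2 = g ` {s..1}"
    unfolding g2_def pi_subpath using s01 by (simp add: closed_segment_eq_real_ivl)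
  have arc1: "arc g1" unfolding g1_def using garc s01 by (intro arc_sp) auto
  have arc2: "arc g2" unfolding g2_def using garc s01 by (intro arc_sp) auto
  have e1: "pathstart g1 = y" "pathfinish g1 = g 0" using s by (simp_all add: g1_def)
  have e2: "pathstart g2 = y" "pathfinish g2 = g 1" using s by (simp_all add: g2_def)
  have g01: "g 0 \<noteq> g 1" using inj_onD[OF gi, of 0 1] by auto
  have pig: "path_image g = path_image g1 \<union> path_image g2"
  proof -
    have "{0..1::real} = {0..s} \<union> {s..1}" using s01 by auto
    then show ?thesis unfolding pi1 pi2 by (simp add: path_image_def image_Un)
  qed
  have sub12: "path_image h \<inter> path_image h' \<subseteq> {pathstart h, pathfinish h} \<inter> {pathstart h', pathfinish h'}"
    if hh: "h \<in> {g1, g2}" "h' \<in> A" "h' \<noteq> g" for h h'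
  proof
    fix x assume x: "x \<in> path_image h \<inter> path_image h'"
    have xg: "x \<in> path_image g" using x hh pig by auto
    then have xx: "x \<in> {pathstart g, pathfinish g} \<inter> {pathstart h', pathfinish h'}"
      using inter[OF g(1) hh(2)] hh(3) x by blast
    have "x \<in> {pathstart h, pathfinish h}"
    proof (cases "h = g1")
      case True
      then obtain u where u: "u \<in> {0..s}" "x = g u" using x pi1 by auto
      have "x \<noteq> g 1"
      proof
        assume "x = g 1"
        then have "u = 1" using inj_onD[OF gi, of u 1] u s01 by auto
        then show False using u s01 by auto
      qed
      then have "x = g 0" using xx unfolding pathstart_def pathfinish_def by auto
      then show ?thesis using True e1 by auto
    next
      case False
      then have h2: "h = g2" using hh by auto
      then obtain u where u: "u \<in> {s..1}" "x = g u" using x pi2 by auto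
      have "x \<noteq> g 0"
      proof
        assume "x = g 0"
        then have "u = 0" using inj_onD[OF gi, of u 0] u s01 by auto
        then show False using u s01 by auto
      qed
      then have "x = g 1" using xx unfolding pathstart_def pathfinish_def by auto
      then show ?thesis using h2 e2 by auto
    qed
    then show "x \<in> {pathstart h, pathfinish h} \<inter> {pathstart h', pathfinish h'}" using xx by blast
  qed
  have pair: "path_image g1 \<inter> path_image g2 \<subseteq> {y}"
  proof
    fix x assume "x \<in> path_image g1 \<inter> path_image g2"
    then obtain u v where uv: "u \<in> {0..s}" "v \<in> {s..1}" "x = g u" "x = g v" using pi1 pi2 by auto
    then have "u = v" using inj_onD[OF gi, of u v] s01 by auto
    then have "u = s" using uv by auto
    then show "x \<in> {y}" using uv s by simp
  qed
  define A' where "A' = insert g1 (insert g2 (A - {g}))"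
  interpret A': graphA \<Gamma> A'
  proof
    show "finite A'" using finA A'_def by simp
    show "arc h" if "h \<in> A'" for h using that arc1 arc2 arcs A'_def by auto
    show "\<Gamma> = \<Union>(path_image ` A')"
    proof -
      have "\<Gamma> = path_image g \<union> \<Union>(path_image ` (A - {g}))" using Geq g(1) by blast
      also have "\<dots> = \<Union>(path_image ` A')" unfolding pig A'_def by auto
      finally show ?thesis .
    qed
    show "path_image h \<inter> path_image h' \<subseteq> {pathstart h, pathfinish h} \<inter> {pathstart h', pathfinish h'}"
      if hh: "h \<in> A'" "h' \<in> A'" "h \<noteq> h'" for h h'
    proof -
      consider "h \<in> A - {g}" "h' \<in> A - {g}" | "h \<in> {g1, g2}" "h' \<in> A - {g}"
        | "h \<in> A - {g}" "h' \<in> {g1,g2}" | "h \<in> {g1, g2}" "h' \<in> {g1,g2}"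
        using hh(1,2) unfolding A'_def by blast
      then show ?thesis
      proof cases
        case 1 then show ?thesis using inter[of h h'] hh(3) by blast
      next
        case 2 then show ?thesis using sub12[of h h'] by blast
      next
        case 3
        then have "path_image h' \<inter> path_image h \<subseteq> {pathstart h', pathfinish h'} \<inter> {pathstart h, pathfinish h}"
          using sub12[of h' h] by blast
        then show ?thesis by blast
      next
        case 4
        then have sub: "path_image h \<inter> path_image h' \<subseteq> {y}" using pair hh(3) by blast
        have st: "pathstart h = y" "pathstart h' = y" using 4 e1 e2 by auto
        show ?thesis
        proof
          fix x assume "x \<in> path_image h \<inter> path_image h'"
          then have "x = y" using sub by blast
          then show "x \<in> {pathstart h, pathfinish h} \<inter> {pathstart h', pathfinish h'}" using st by simp
        qed
      qed
    qed
  qed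
  have "y \<in> pathstart ` A' \<union> pathfinish ` A'" using e1 A'_def by auto
  from A'.vertex_star[OF this] obtain S h h' where
    SH: "openin (top_of_set \<Gamma>) S" "y \<in> S"
      "homeomorphism S (open_star (card {g\<in>A'. pathstart g = y \<or> pathfinish g = y})) h h'" "h y = 0"
    by blast
  have g12: "g1 \<noteq> g2" using e1 e2 g01 by metis
  have Ay: "{g\<in>A'. pathstart g = y \<or> pathfinish g = y} = {g1, g2}"
  proof
    show "{g1, g2} \<subseteq> {g\<in>A'. pathstart g = y \<or> pathfinish g = y}" using e1 e2 A'_def by auto
    show "{g\<in>A'. pathstart g = y \<or> pathfinish g = y} \<subseteq> {g1, g2}"
    proof
      fix h assume h0: "h \<in> {g\<in>A'. pathstart g = y \<or> pathfinish g = y}"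
      show "h \<in> {g1, g2}"
      proof (rule ccontr)
      assume "h \<notin> {g1, g2}"
      then have h: "h \<in> A'" "pathstart h = y \<or> pathfinish h = y" "h \<noteq> g1" "h \<noteq> g2" using h0 by auto
      then have hA: "h \<in> A" "h \<noteq> g" using A'_def by auto
      have "y \<in> path_image h" using h(2) pathstart_in_path_image pathfinish_in_path_image by metis
      then have "y \<in> {pathstart g, pathfinish g}" using inter[OF g(1) hA(1)] hA(2) g(2) by blast
      then show False using \<open>pathstart g \<noteq> y\<close> \<open>pathfinish g \<noteq> y\<close> by auto
      qed
    qed
  qed
  have "card {g1, g2} = 2" using g12 by simp
  then have "homeomorphism S (open_star 2) h h'" using SH(3) unfolding Ay by simp
  then show ?thesis using SH(1,2,4) by blast
qed

lemma graph_local: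
  assumes "is_graph \<Gamma>"
  obtains F where "finite F"
    "\<And>y. y \<in> \<Gamma> \<Longrightarrow> \<exists>S d h h'. openin (top_of_set \<Gamma>) S \<and> y \<in> S \<and> 1 \<le> d \<and>
        homeomorphism S (open_star d) h h' \<and> h y = 0 \<and> (y \<notin> F \<longrightarrow> d \<le> 2)"
proof -
  obtain A :: "(real \<Rightarrow> _) set" where A: "finite A" "\<forall>g\<in>A. arc g" "\<Gamma> = \<Union>(path_image ` A)"
    "\<forall>g\<in>A. \<forall>g'\<in>A. g \<noteq> g' \<longrightarrow>
           path_image g \<inter> path_image g' \<subseteq> {pathstart g, pathfinish g} \<inter> {pathstart g', pathfinish g'}"
    using assms unfolding is_graph_def by blast
  interpret graphA \<Gamma> A using A by unfold_locales auto
  define F where "F = pathstart ` A \<union> pathfinish ` A"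
  have "finite F" using A(1) F_def by simp
  moreover have "\<exists>S d h h'. openin (top_of_set \<Gamma>) S \<and> y \<in> S \<and> 1 \<le> d \<and>
        homeomorphism S (open_star d) h h' \<and> h y = 0 \<and> (y \<notin> F \<longrightarrow> d \<le> 2)" if yG: "y \<in> \<Gamma>" for y
  proof (cases "y \<in> F")
    case True
    then obtain S h h' where "openin (top_of_set \<Gamma>) S" "y \<in> S"
       "1 \<le> card {g\<in>A. pathstart g = y \<or> pathfinish g = y}"
       "homeomorphism S (open_star (card {g\<in>A. pathstart g = y \<or> pathfinish g = y})) h h'" "h y = 0"
      using vertex_star[of y] F_def by blast
    then show ?thesis
      by (intro exI[of _ S] exI[of _ "card {g\<in>A. pathstart g = y \<or> pathfinish g = y}"] exI[of _ h] exI[of _ h'])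
         (use True in auto)
  next
    case False
    then have yF: "y \<notin> pathstart ` A \<union> pathfinish ` A" using F_def by simp
    obtain S h h' where "openin (top_of_set \<Gamma>) S" "y \<in> S" "homeomorphism S (open_star 2) h h'" "h y = 0"
      using interior_star[OF yG yF] by blast
    then show ?thesis by (intro exI[of _ S] exI[of _ 2] exI[of _ h] exI[of _ h']) auto
  qed
  ultimately show ?thesis using that by blast
qed

lemma in_open_star: "0 \<le> t \<Longrightarrow> t < 1 \<Longrightarrow> j < N \<Longrightarrow> of_real t * dir N j \<in> open_star N"
proof -
  assume a: "0 \<le> t" "t < 1" "j < N"
  then have "1 \<le> N" by simp
  show ?thesis unfolding open_star_eq[OF \<open>1 \<le> N\<close>] by (intro CollectI exI[of _ t] exI[of _ j]) (use a in auto)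
qed

lemma branch_sub: "j < N \<Longrightarrow> star_branch N j \<subseteq> open_star N"
  unfolding star_branch_eq using in_open_star by auto

lemma zero_branch: "0 \<in> star_branch N j"
  unfolding star_branch_eq by (intro image_eqI[of _ _ 0]) auto

lemma open_star_Union: "1 \<le> N \<Longrightarrow> open_star N = (\<Union>j<N. star_branch N j)"
proof -
  assume N: "1 \<le> N"
  show ?thesis
  proof
    show "open_star N \<subseteq> (\<Union>j<N. star_branch N j)" unfolding open_star_eq[OF N] star_branch_eq by auto
    show "(\<Union>j<N. star_branch N j) \<subseteq> open_star N" using branch_sub by blast
  qed
qed

definition ray :: "nat \<Rightarrow> nat \<Rightarrow> complex set" where
  "ray N j = {of_real t * dir N j | t. 0 < t \<and> t < 1}"

lemma ray_openin:
  assumes "j < N"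
  shows "openin (top_of_set (open_star N)) (ray N j)"
proof -
  have N: "1 \<le> N" using assms by simp
  define C where "C i = (\<lambda>t. of_real t * dir N i) ` {0..1}" for i
  define K where "K = {0} \<union> (\<Union>i\<in>{..<N}-{j}. C i)"
  have "closed (C i)" for i
    unfolding C_def by (intro compact_imp_closed compact_continuous_image continuous_intros) auto
  then have cK: "closed K" unfolding K_def by (intro closed_Un closed_UN) auto
  have "ray N j = open_star N \<inter> (- K)"
  proof
    show "ray N j \<subseteq> open_star N \<inter> - K"
    proof
      fix w assume "w \<in> ray N j"
      then obtain t where t: "0 < t" "t < 1" "w = of_real t * dir N j" unfolding ray_def by auto
      have "w \<in> open_star N" using in_open_star[of t j N] t assms by auto
      moreover have "w \<noteq> 0" using t by simp
      moreover have "w \<notin> C i" if "i \<in> {..<N}-{j}" for i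
      proof
        assume "w \<in> C i"
        then obtain s where "s \<in> {0..1}" "w = of_real s * dir N i" unfolding C_def by auto
        then have "j = i" using ray_eq[OF N assms _ t(1), of i s] t that by auto
        then show False using that by simp
      qed
      ultimately show "w \<in> open_star N \<inter> - K" unfolding K_def by blast
    qed
    show "open_star N \<inter> - K \<subseteq> ray N j"
    proof
      fix w assume w: "w \<in> open_star N \<inter> - K"
      then obtain t i where ti: "0 \<le> t" "t < 1" "i < N" "w = of_real t * dir N i"
        unfolding open_star_eq[OF N] by auto
      have "w \<noteq> 0" using w K_def by auto
      then have t0: "t > 0" using ti by auto
      have "i = j"
      proof (rule ccontr)
        assume "i \<noteq> j"
        then have "w \<in> C i" unfolding C_def using ti by auto
        then show False using w \<open>i \<noteq> j\<close> ti(3) unfolding K_def by blast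
      qed
      then show "w \<in> ray N j" unfolding ray_def using ti t0 by auto
    qed
  qed
  then show ?thesis using openin_open_Int[OF open_Compl[OF cK]] by simp
qed

lemma openin_sub_Gamma:
  assumes "openin (top_of_set \<Gamma>) W" "Z \<subseteq> \<Gamma>" "U \<subseteq> Z"
  shows "openin (top_of_set U) (U \<inter> W)"
proof -
  obtain T where T: "open T" "W = \<Gamma> \<inter> T" using assms(1) openin_open by metis
  have "U \<inter> W = U \<inter> T" using T assms by blast
  then show ?thesis using openin_open_Int[OF T(1)] by simp
qed

lemma pull:
  assumes sp: "star_point Z k x" and ZG: "Z \<subseteq> \<Gamma>" and W: "openin (top_of_set \<Gamma>) W" "x \<in> W"
  obtains U g where "openin (top_of_set (open_star k)) U" "0 \<in> U" "continuous_on U g" "inj_on g U"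
    "g 0 = x" "g ` U \<subseteq> Z \<inter> W"
proof -
  obtain UZ f g where UZ: "openin (top_of_set Z) UZ" "x \<in> UZ" "homeomorphism UZ (open_star k) f g" "f x = 0"
    using sp unfolding star_point_def by blast
  have UZZ: "UZ \<subseteq> Z" using UZ(1) by (rule openin_imp_subset)
  define Ob where "Ob = UZ \<inter> W"
  have oO: "openin (top_of_set UZ) Ob" unfolding Ob_def by (rule openin_sub_Gamma[OF W(1) ZG UZZ])
  define U where "U = f ` Ob"
  have oU: "openin (top_of_set (open_star k)) U"
    unfolding U_def by (rule homeomorphism_imp_open_map[OF UZ(3) oO])
  have "x \<in> Ob" using UZ W Ob_def by auto
  then have U0: "0 \<in> U" using UZ(4) U_def by force
  have OUZ: "Ob \<subseteq> UZ" using Ob_def by auto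
  have Usub: "U \<subseteq> open_star k" using oU by (rule openin_imp_subset)
  have hg: "\<forall>z\<in>open_star k. f (g z) = z" "\<forall>y\<in>UZ. g (f y) = y" "continuous_on (open_star k) g"
    "g ` open_star k = UZ"
    using UZ(3) unfolding homeomorphism_def by auto
  have "continuous_on U g" using continuous_on_subset[OF hg(3) Usub] .
  moreover have "inj_on g U"
  proof (rule inj_onI)
    fix z z' assume "z \<in> U" "z' \<in> U" "g z = g z'"
    then show "z = z'" using hg(1) Usub by (metis subsetD)
  qed
  moreover have "g 0 = x" using hg(2) UZ(2,4) by metis
  moreover have "g ` U \<subseteq> Z \<inter> W"
  proof
    fix y assume "y \<in> g ` U"
    then obtain z where "z \<in> Ob" "y = g (f z)" unfolding U_def by auto
    then have "y = z" "z \<in> Ob" using hg(2) OUZ by auto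
    then show "y \<in> Z \<inter> W" using Ob_def UZZ by auto
  qed
  ultimately show ?thesis using that oU U0 by blast
qed

lemma compose_h:
  assumes "homeomorphism S T h h'" "continuous_on U g" "inj_on g U" "g ` U \<subseteq> S"
  shows "continuous_on U (h \<circ> g)" "inj_on (h \<circ> g) U"
proof -
  have h: "continuous_on S h" "\<forall>x\<in>S. h' (h x) = x" using assms(1) unfolding homeomorphism_def by auto
  show "continuous_on U (h \<circ> g)" by (rule continuous_on_compose[OF assms(2) continuous_on_subset[OF h(1) assms(4)]])
  show "inj_on (h \<circ> g) U"
  proof (rule inj_onI)
    fix z z' assume z: "z \<in> U" "z' \<in> U" "(h \<circ> g) z = (h \<circ> g) z'"
    then have "h' (h (g z)) = h' (h (g z'))" by simp
    then have "g z = g z'" using h(2) assms(4) z by (metis image_subset_iff)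
    then show "z = z'" using assms(3) z by (meson inj_onD)
  qed
qed

lemma star_le:
  assumes sp: "star_point Z r y" and ZG: "Z \<subseteq> \<Gamma>" and S: "openin (top_of_set \<Gamma>) S"
    "homeomorphism S (open_star N) h h'" "y \<in> S" "h y = 0" and N: "1 \<le> N" and J: "J \<subseteq> {..<N}"
    and img: "h ` (Z \<inter> S) \<subseteq> (\<Union>j\<in>J. star_branch N j)"
  shows "r \<le> card J"
proof -
  obtain U g where U: "openin (top_of_set (open_star r)) U" "0 \<in> U" "continuous_on U g" "inj_on g U"
    "g 0 = y" "g ` U \<subseteq> Z \<inter> S"
    using pull[OF sp ZG S(1) S(3)] by blast
  have gS: "g ` U \<subseteq> S" using U(6) by auto
  note c = compose_h[OF S(2) U(3) U(4) gS]
  show ?thesis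
  proof (rule emb[OF N J U(1) U(2) c])
    show "(h \<circ> g) 0 = 0" using U(5) S(4) by simp
    show "(h \<circ> g) ` U \<subseteq> (\<Union>j\<in>J. star_branch N j)" using img U(6) by (auto simp: image_subset_iff)
  qed
qed

lemma finite_closed_cover:
  assumes "finite \<C>" "\<forall>C\<in>\<C>. closed C" "openin (top_of_set B) Ob" "Ob \<noteq> {}" "Ob \<subseteq> \<Union>\<C>"
  shows "\<exists>C\<in>\<C>. \<exists>Ob'. openin (top_of_set B) Ob' \<and> Ob' \<noteq> {} \<and> Ob' \<subseteq> Ob \<inter> C"
  using assms
proof (induction \<C> arbitrary: Ob rule: finite_induct)
  case empty
  then show ?case by auto
next
  case (insert C \<C>)
  show ?case
  proof (cases "Ob \<subseteq> C")
    case True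
    then show ?thesis using insert.prems by blast
  next
    case False
    define O2 where "O2 = Ob - C"
    have "Ob \<subseteq> B" using insert.prems(2) by (rule openin_imp_subset)
    then have "O2 = Ob \<inter> (B \<inter> - C)" unfolding O2_def by blast
    moreover have "openin (top_of_set B) (B \<inter> - C)" using insert.prems(1) by (intro openin_open_Int) auto
    ultimately have "openin (top_of_set B) O2" using insert.prems(2) by (simp add: openin_Int)
    moreover have "O2 \<noteq> {}" using False O2_def by auto
    moreover have "O2 \<subseteq> \<Union>\<C>" using insert.prems(4) O2_def by auto
    ultimately obtain C' Ob' where "C' \<in> \<C>" "openin (top_of_set B) Ob'" "Ob' \<noteq> {}" "Ob' \<subseteq> O2 \<inter> C'"
      using insert.IH insert.prems(1) by blast
    then show ?thesis using O2_def by blast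
  qed
qed

lemma ball_inside:
  fixes B :: "'a::metric_space set"
  assumes "openin (top_of_set B) Ob" "Ob \<noteq> {}"
  obtains W where "open_ball_in B W" "W \<subseteq> Ob"
proof -
  obtain c where c: "c \<in> Ob" using assms by blast
  then obtain e where e: "e > 0" "ball c e \<inter> B \<subseteq> Ob" using assms(1) openin_contains_ball by metis
  have "c \<in> B" using c openin_imp_subset[OF assms(1)] by blast
  then have "open_ball_in B (ball c e \<inter> B)" unfolding open_ball_in_def using e by blast
  then show ?thesis using that e by blast
qed

lemma dec:
  fixes Z \<Gamma> :: "'g::metric_space set" and h :: "'g \<Rightarrow> complex"
  assumes Z: "closed Z" "Z \<subseteq> \<Gamma>" "\<And>x. x \<in> Z \<Longrightarrow> \<not> end_point Z x"
   and S: "openin (top_of_set \<Gamma>) S" "homeomorphism S (open_star N) h h'" "1 \<le> N" "q \<in> S" "h q = 0" "q \<in> Z"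
  shows "Z \<inter> S = h' ` (\<Union>j\<in>{j. j<N \<and> (\<forall>t. 0<t \<and> t<1 \<longrightarrow> h' (of_real t * dir N j) \<in> Z)}. star_branch N j)"
proof -
  define JJ where "JJ = {j. j<N \<and> (\<forall>t. 0<t \<and> t<1 \<longrightarrow> h' (of_real t * dir N j) \<in> Z)}"
  have H: "h ` S = open_star N" "h' ` open_star N = S" "\<And>x. x\<in>S \<Longrightarrow> h'(h x) = x"
    "\<And>y. y \<in> open_star N \<Longrightarrow> h(h' y) = y" "continuous_on S h" "continuous_on (open_star N) h'"
    using S(2) unfolding homeomorphism_def by auto
  have hq': "h' 0 = q" using H(3)[OF S(4)] S(5) by simp
  have starx: "\<exists>k\<ge>2. star_point Z k x" if "x \<in> Z" for x
    using Z(3)[OF that] that unfolding end_point_def by auto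
  have loc: "\<exists>\<delta>>0. \<forall>t. \<bar>t - t1\<bar> < \<delta> \<longrightarrow> of_real t * dir N j \<in> h ` (Z \<inter> S)"
    if j: "j < N" and t1: "0 < t1" "t1 < 1" and xZ: "h' (of_real t1 * dir N j) \<in> Z" for j t1
  proof -
    define x where "x = h' (of_real t1 * dir N j)"
    have w: "of_real t1 * dir N j \<in> open_star N" by (rule in_open_star) (use t1 j in auto)
    have xS: "x \<in> S" using H(2) w x_def by blast
    have hx: "h x = of_real t1 * dir N j" using H(4)[OF w] x_def by simp
    obtain k where k: "k \<ge> 2" "star_point Z k x" using starx xZ x_def by blast
    define W where "W = S \<inter> h -` ray N j"
    have oW: "openin (top_of_set \<Gamma>) W"
    proof -
      have "openin (top_of_set S) (S \<inter> h -` ray N j)"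
        by (rule continuous_openin_preimage[OF H(5) _ ray_openin[OF j]]) (use H(1) in blast)
      then show ?thesis unfolding W_def using S(1) openin_trans by blast
    qed
    have xW: "x \<in> W" unfolding W_def ray_def using xS hx t1 by auto
    obtain U g where U: "openin (top_of_set (open_star k)) U" "0 \<in> U" "continuous_on U g" "inj_on g U"
      "g 0 = x" "g ` U \<subseteq> Z \<inter> W"
      using pull[OF k(2) Z(2) oW xW] by blast
    have gS: "g ` U \<subseteq> S" using U(6) W_def by auto
    note c = compose_h[OF S(2) U(3) U(4) gS]
    have "\<exists>\<delta>>0. \<forall>t. \<bar>t - t1\<bar> < \<delta> \<longrightarrow> of_real t * dir N j \<in> (h \<circ> g) ` U"
    proof (rule emb2[OF S(3) j k(1) U(1) U(2) c _ t1(1)])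
      show "(h \<circ> g) 0 = of_real t1 * dir N j" using U(5) hx by simp
      show "\<exists>t>0. (h \<circ> g) z = of_real t * dir N j" if "z \<in> U" for z
      proof -
        have "g z \<in> W" using U(6) that by auto
        then have "h (g z) \<in> ray N j" unfolding W_def by auto
        then show ?thesis unfolding ray_def by auto
      qed
    qed
    moreover have "(h \<circ> g) ` U \<subseteq> h ` (Z \<inter> S)" using U(6) W_def by auto
    ultimately show ?thesis by blast
  qed
  have step: "j \<in> JJ" if j: "j < N" and t0: "0 < t0" "t0 < 1" "h' (of_real t0 * dir N j) \<in> Z" for j t0
  proof -
    define \<phi> where "\<phi> t = h' (of_real t * dir N j)" for t
    define P where "P = {0<..<1} \<inter> \<phi> -` Z"
    have cl0: "continuous_on {0<..<1::real} (\<lambda>t. of_real t * dir N j)"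
      by (intro continuous_intros)
    have cphi: "continuous_on {0<..<1} \<phi>" unfolding \<phi>_def
      by (rule continuous_on_compose2[OF H(6) cl0]) (use in_open_star j in auto)
    have cl: "closedin (top_of_set {0<..<1}) P" unfolding P_def
      by (rule continuous_closedin_preimage[OF cphi Z(1)])
    have op: "openin (top_of_set {0<..<1}) P"
      unfolding openin_euclidean_subtopology_iff
    proof (intro conjI ballI)
      show "P \<subseteq> {0<..<1}" unfolding P_def by auto
      fix t1 assume "t1 \<in> P"
      then have t1: "0 < t1" "t1 < 1" "h' (of_real t1 * dir N j) \<in> Z" unfolding P_def \<phi>_def by auto
      obtain \<delta> where \<delta>: "\<delta> > 0" "\<And>t. \<bar>t - t1\<bar> < \<delta> \<Longrightarrow> of_real t * dir N j \<in> h ` (Z \<inter> S)"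
        using loc[OF j t1] by blast
      show "\<exists>e>0. \<forall>x'\<in>{0<..<1}. dist x' t1 < e \<longrightarrow> x' \<in> P"
      proof (intro exI[of _ \<delta>] conjI ballI impI \<delta>(1))
        fix t assume t: "t \<in> {0<..<1}" "dist t t1 < \<delta>"
        then obtain y where y: "y \<in> Z \<inter> S" "of_real t * dir N j = h y"
          using \<delta>(2)[of t] by (auto simp: dist_real_def)
        then have "\<phi> t = y" unfolding \<phi>_def using H(3) by simp
        then show "t \<in> P" unfolding P_def using t y by auto
      qed
    qed
    have "t0 \<in> P" unfolding P_def \<phi>_def using t0 by auto
    then have "P = {0<..<1}" using connected_clopen[of "{0<..<1::real}"] cl op by auto
    have "\<forall>t. 0<t \<and> t<1 \<longrightarrow> h' (of_real t * dir N j) \<in> Z"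
    proof (intro allI impI)
      fix t :: real assume t: "0 < t \<and> t < 1"
      then have "t \<in> P" using \<open>P = {0<..<1}\<close> by simp
      then show "h' (of_real t * dir N j) \<in> Z" unfolding P_def \<phi>_def by simp
    qed
    then show "j \<in> JJ" unfolding JJ_def using j by simp
  qed
  have ne: "JJ \<noteq> {}"
  proof
    assume JJ0: "JJ = {}"
    have onlyq: "y = q" if y: "y \<in> Z \<inter> S" for y
    proof -
      have "h y \<in> open_star N" using H(1) y by blast
      then obtain t j where tj: "0 \<le> t" "t < 1" "j < N" "h y = of_real t * dir N j"
        unfolding open_star_eq[OF S(3)] by auto
      have yy: "h' (h y) = y" using H(3) y by simp
      show "y = q"
      proof (cases "t = 0")
        case True
        then have "h y = 0" using tj by simp
        then show ?thesis using yy hq' by simp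
      next
        case False
        then have "h' (of_real t * dir N j) \<in> Z" using yy y tj(4) by simp
        then have "j \<in> JJ" using step[OF tj(3) _ tj(2)] False tj(1) by auto
        then show ?thesis using JJ0 by simp
      qed
    qed
    obtain k where k: "k \<ge> 2" "star_point Z k q" using starx S(6) by blast
    obtain U g where U: "openin (top_of_set (open_star k)) U" "0 \<in> U" "continuous_on U g" "inj_on g U"
      "g 0 = q" "g ` U \<subseteq> Z \<inter> S"
      using pull[OF k(2) Z(2) S(1) S(4)] by blast
    obtain \<epsilon> where \<epsilon>: "0 < \<epsilon>" "\<epsilon> < 1" "\<And>i s. i < k \<Longrightarrow> s \<in> {0..\<epsilon>} \<Longrightarrow> of_real s * dir k i \<in> U"
      using small_ball_open_star[OF U(1,2)] by blast
    have eU: "of_real \<epsilon> * dir k 0 \<in> U" using \<epsilon> k by auto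
    have "g (of_real \<epsilon> * dir k 0) = q" using onlyq U(6) eU by blast
    then have "g (of_real \<epsilon> * dir k 0) = g 0" using U(5) by simp
    then have "of_real \<epsilon> * dir k 0 = 0" using inj_onD[OF U(4) _ eU U(2)] by blast
    then show False using \<epsilon> by simp
  qed
  show ?thesis unfolding JJ_def[symmetric]
  proof
    show "Z \<inter> S \<subseteq> h' ` (\<Union>j\<in>JJ. star_branch N j)"
    proof
      fix y assume y: "y \<in> Z \<inter> S"
      have "h y \<in> open_star N" using H(1) y by blast
      then obtain t j where tj: "0 \<le> t" "t < 1" "j < N" "h y = of_real t * dir N j"
        unfolding open_star_eq[OF S(3)] by auto
      have yy: "h' (h y) = y" using H(3) y by simp
      show "y \<in> h' ` (\<Union>j\<in>JJ. star_branch N j)"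
      proof (cases "t = 0")
        case True
        obtain j0 where "j0 \<in> JJ" using ne by blast
        moreover have "y = h' 0" using True tj yy by simp
        ultimately show ?thesis using zero_branch by blast
      next
        case False
        have "h' (of_real t * dir N j) \<in> Z" using yy y tj(4) by simp
        then have "j \<in> JJ" using step[OF tj(3) _ tj(2)] False tj(1) by auto
        moreover have "h y \<in> star_branch N j" unfolding star_branch_eq using tj by auto
        ultimately show ?thesis using yy by (metis UN_I image_eqI)
      qed
    qed
    show "h' ` (\<Union>j\<in>JJ. star_branch N j) \<subseteq> Z \<inter> S"
    proof
      fix y assume "y \<in> h' ` (\<Union>j\<in>JJ. star_branch N j)"
      then obtain j w where jw: "j \<in> JJ" "w \<in> star_branch N j" "y = h' w" by auto
      then obtain t where t: "0 \<le> t" "t < 1" "w = of_real t * dir N j" unfolding star_branch_eq by auto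
      have jN: "j < N" using jw JJ_def by auto
      have "w \<in> open_star N" using branch_sub[OF jN] jw by auto
      then have "y \<in> S" using H(2) jw by blast
      moreover have "y \<in> Z"
      proof (cases "t = 0")
        case True then show ?thesis using jw t hq' S(6) by simp
      next
        case False then show ?thesis using jw t JJ_def by auto
      qed
      ultimately show "y \<in> Z \<inter> S" by blast
    qed
  qed
qed

lemma substar:
  assumes J: "J \<subseteq> {..<N}" "card J = k" "1 \<le> k"
  shows "\<exists>\<Phi> \<Psi>. homeomorphism (open_star k) (\<Union>j\<in>J. star_branch N j) \<Phi> \<Psi> \<and> \<Phi> 0 = 0"
proof -
  have fJ: "finite J" using J(1) finite_subset by blast
  obtain \<sigma> where \<sigma>: "bij_betw \<sigma> {0..<k} J" using ex_bij_betw_nat_finite[OF fJ] J(2) by blast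
  have \<sigma>J: "\<sigma> i \<in> J" if "i < k" for i using \<sigma> that unfolding bij_betw_def by auto
  have \<sigma>inj: "i = i'" if "i < k" "i' < k" "\<sigma> i = \<sigma> i'" for i i'
    using \<sigma> that unfolding bij_betw_def inj_on_def by auto
  have \<sigma>N: "\<sigma> i < N" if "i < k" for i using \<sigma>J[OF that] J(1) by auto
  have N: "1 \<le> N" using \<sigma>N[of 0] J(3) by auto
  define \<gamma> where "\<gamma> i t = of_real t * dir N (\<sigma> i)" for i t
  have "\<exists>\<Phi> \<Psi>. homeomorphism (open_star k) (\<Union>i<k. \<gamma> i ` {0..<1}) \<Phi> \<Psi> \<and> \<Phi> 0 = 0"
  proof (rule gen[OF J(3)])
    show "continuous_on {0..1} (\<gamma> i)" for i unfolding \<gamma>_def by (intro continuous_intros)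
    show "inj_on (\<gamma> i) {0..1}" for i unfolding \<gamma>_def by (rule inj_onI) simp
    show "\<gamma> i 0 = 0" for i unfolding \<gamma>_def by simp
    show "s = 0" if ik: "i<k" "i'<k" "i\<noteq>i'" "s\<in>{0..1}" "t\<in>{0..1}" "\<gamma> i s = \<gamma> i' t" for i i' s t
    proof (rule ccontr)
      assume "s \<noteq> 0"
      then have "s > 0" using ik by auto
      then have "\<sigma> i = \<sigma> i'" using ray_eq[OF N \<sigma>N[OF ik(1)] \<sigma>N[OF ik(2)], of s t] ik unfolding \<gamma>_def by auto
      then show False using \<sigma>inj ik by blast
    qed
  qed
  moreover have "(\<Union>i<k. \<gamma> i ` {0..<1}) = (\<Union>j\<in>J. star_branch N j)"
  proof -
    have "(\<Union>i<k. \<gamma> i ` {0..<1}) = (\<Union>i\<in>{0..<k}. star_branch N (\<sigma> i))"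
      unfolding \<gamma>_def star_branch_eq by auto
    also have "\<dots> = (\<Union>j\<in>\<sigma> ` {0..<k}. star_branch N j)" by simp
    also have "\<dots> = (\<Union>j\<in>J. star_branch N j)" using \<sigma> unfolding bij_betw_def by simp
    finally show ?thesis .
  qed
  ultimately show ?thesis by simp
qed

lemma ram_of_card:
  assumes ZS: "Z \<inter> S = h' ` (\<Union>j\<in>J. star_branch N j)" and J: "J \<subseteq> {..<N}" "3 \<le> card J"
   and S: "openin (top_of_set \<Gamma>) S" "homeomorphism S (open_star N) h h'" "q \<in> S" "h q = 0"
   and Z: "Z \<subseteq> \<Gamma>" "q \<in> Z"
  shows "ramification_point Z q"
proof -
  define X where "X = (\<Union>j\<in>J. star_branch N j)"
  have k1: "1 \<le> card J" using J(2) by simp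
  obtain \<Phi> \<Psi> where hom: "homeomorphism (open_star (card J)) X \<Phi> \<Psi>" "\<Phi> 0 = 0"
    using substar[OF J(1) refl k1] X_def by blast
  have XN: "X \<subseteq> open_star N" using branch_sub J(1) X_def by blast
  have H4: "\<And>y. y \<in> open_star N \<Longrightarrow> h(h' y) = y" using S(2) unfolding homeomorphism_def by auto
  have hZS: "h ` (Z \<inter> S) = X"
  proof -
    have "h ` (Z \<inter> S) = (h \<circ> h') ` X" unfolding ZS X_def by (simp add: image_comp)
    also have "\<dots> = X" using H4 XN by (force simp: image_iff)
    finally show ?thesis .
  qed
  have hom1: "homeomorphism (Z \<inter> S) X h h'" by (rule homeomorphism_of_subsets[OF S(2) _ XN hZS]) auto
  have hom2: "homeomorphism (Z \<inter> S) (open_star (card J)) (\<Psi> \<circ> h) (h' \<circ> \<Phi>)"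
    by (rule homeomorphism_compose[OF hom1 homeomorphism_symD[OF hom(1)]])
  have o: "openin (top_of_set Z) (Z \<inter> S)" using openin_sub_Gamma[OF S(1) Z(1) subset_refl] by simp
  have z0: "0 \<in> open_star (card J)" by (rule zero_open_star[OF k1])
  have q0: "(\<Psi> \<circ> h) q = 0" using homeomorphism_apply1[OF hom(1) z0] hom(2) S(4) by simp
  have qZS: "q \<in> Z \<inter> S" using Z S by blast
  have "star_point Z (card J) q" unfolding star_point_def using o qZS hom2 q0 by blast
  then show ?thesis unfolding ramification_point_def using J(2) Z(2) by blast
qed

theorem lemma15:
  fixes B :: "'a::metric_space set" and \<Gamma> :: "'g::metric_space set" and M :: "('a \<times> 'g) set"
  assumes "compact B" and "is_graph \<Gamma>"
    and "M \<subseteq> B \<times> \<Gamma>" and "closed M"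
    and "End_set B M = {}"
  shows "(\<forall>U. open_ball_in B U \<and> U \<subseteq> R_B B M \<longrightarrow>
            (\<exists>V q. open_ball_in B V \<and> V \<subseteq> U \<and> ramification_point \<Gamma> q \<and> V \<times> {q} \<subseteq> R_E B \<Gamma> M))
       \<and> (\<forall>q N V S (h :: 'g \<Rightarrow> complex) h'.
            ramification_point \<Gamma> q \<and> N \<ge> 3 \<and>
            open_ball_in B V \<and> V \<times> {q} \<subseteq> R_E B \<Gamma> M \<and>
            S \<subseteq> \<Gamma> \<and> openin (top_of_set \<Gamma>) S \<and> q \<in> S \<and>
            homeomorphism S (open_star N) h h' \<and> h q = 0
          \<longrightarrow> (\<exists>J W. J \<subseteq> {..<N} \<and> card J \<ge> 3 \<and> open_ball_in B W \<and> W \<subseteq> V \<and>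
                 (W \<times> S) \<inter> M = W \<times> (h' ` (\<Union>j\<in>J. star_branch N j))))"
proof -
  have cvb: "closed {b. (b, c) \<in> M}" for c
  proof -
    have "{b. (b, c) \<in> M} = (\<lambda>b. (b, c)) -` M" by auto
    moreover have "closed ((\<lambda>b. (b, c)) -` M)"
      by (rule continuous_closed_vimage[OF assms(4)]) (intro continuous_intros)
    ultimately show ?thesis by simp
  qed
  have fclosed: "closed (fibre M b)" for b
  proof -
    have "fibre M b = (\<lambda>y. (b, y)) -` M" unfolding fibre_def by auto
    moreover have "closed ((\<lambda>y. (b, y)) -` M)"
      by (rule continuous_closed_vimage[OF assms(4)]) (intro continuous_intros)
    ultimately show ?thesis by simp
  qed
  have fsub: "fibre M b \<subseteq> \<Gamma>" for b using assms(3) unfolding fibre_def by auto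
  have noend: "\<not> end_point (fibre M b) x" if "b \<in> B" for b x
  proof
    assume "end_point (fibre M b) x"
    then have "(b, x) \<in> End_set B M" unfolding End_set_def using that by simp
    then show False using assms(5) by simp
  qed
  have oball: "openin (top_of_set B) V \<and> V \<noteq> {} \<and> V \<subseteq> B" if Vb: "open_ball_in B V" for V
  proof -
    obtain c r where cr: "c \<in> B" "r > 0" "V = ball c r \<inter> B" using Vb unfolding open_ball_in_def by blast
    have "openin (top_of_set B) (B \<inter> ball c r)" by (intro openin_open_Int) auto
    moreover have "c \<in> V" using cr by auto
    ultimately show ?thesis using cr by (auto simp: Int_commute)
  qed
  have image_hh': "h ` (h' ` X) \<subseteq> X" if "homeomorphism S (open_star N) h h'" "X \<subseteq> open_star N"
    for S N and h :: "'g \<Rightarrow> complex" and h' X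
    using that unfolding homeomorphism_def by (auto simp: subset_iff)
  have partb: "\<forall>q N V S (h :: 'g \<Rightarrow> complex) h'.
            ramification_point \<Gamma> q \<and> N \<ge> 3 \<and>
            open_ball_in B V \<and> V \<times> {q} \<subseteq> R_E B \<Gamma> M \<and>
            S \<subseteq> \<Gamma> \<and> openin (top_of_set \<Gamma>) S \<and> q \<in> S \<and>
            homeomorphism S (open_star N) h h' \<and> h q = 0
          \<longrightarrow> (\<exists>J W. J \<subseteq> {..<N} \<and> card J \<ge> 3 \<and> open_ball_in B W \<and> W \<subseteq> V \<and>
                 (W \<times> S) \<inter> M = W \<times> (h' ` (\<Union>j\<in>J. star_branch N j)))"
  proof (intro allI impI, elim conjE)
    fix q N V S and h :: "'g \<Rightarrow> complex" and h'
    assume q: "ramification_point \<Gamma> q" and N3: "N \<ge> 3" and V: "open_ball_in B V"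
      and VR: "V \<times> {q} \<subseteq> R_E B \<Gamma> M" and S: "S \<subseteq> \<Gamma>" "openin (top_of_set \<Gamma>) S" "q \<in> S"
      "homeomorphism S (open_star N) h h'" "h q = 0"
    have N1: "1 \<le> N" using N3 by simp
    have oV: "openin (top_of_set B) V" "V \<noteq> {}" "V \<subseteq> B" using oball[OF V] by auto
    have ramb: "ramification_point (fibre M b) q" if "b \<in> V" for b
      using VR that unfolding R_E_def by auto
    have qfb: "q \<in> fibre M b" if "b \<in> V" for b using ramb[OF that] unfolding ramification_point_def by simp
    define JB where "JB b = {j. j<N \<and> (\<forall>t. 0<t \<and> t<1 \<longrightarrow> h' (of_real t * dir N j) \<in> fibre M b)}" for b
    have JBN: "JB b \<subseteq> {..<N}" for b unfolding JB_def by auto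
    have decb: "fibre M b \<inter> S = h' ` (\<Union>j\<in>JB b. star_branch N j)" if "b \<in> V" for b
      unfolding JB_def
      by (rule dec[OF fclosed fsub noend S(2) S(4) N1 S(3) S(5) qfb[OF that]]) (use that oV in auto)
    have cardb: "3 \<le> card (JB b)" if b: "b \<in> V" for b
    proof -
      obtain r where r: "r \<ge> 3" "star_point (fibre M b) r q"
        using ramb[OF b] unfolding ramification_point_def by blast
      have XN: "(\<Union>j\<in>JB b. star_branch N j) \<subseteq> open_star N" using branch_sub JBN by blast
      have "r \<le> card (JB b)"
      proof (rule star_le[OF r(2) fsub S(2) S(4) S(3) S(5) N1 JBN])
        show "h ` (fibre M b \<inter> S) \<subseteq> (\<Union>j\<in>JB b. star_branch N j)"
          unfolding decb[OF b] by (rule image_hh'[OF S(4) XN])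
      qed
      then show ?thesis using r by simp
    qed
    define C where "C J = {b. \<forall>j\<in>J. \<forall>t. 0<t \<and> t<1 \<longrightarrow> (b, h' (of_real t * dir N j)) \<in> M}" for J
    have cC: "closed (C J)" for J
    proof -
      have "C J = (\<Inter>j\<in>J. \<Inter>t\<in>{0<..<1::real}. {b. (b, h' (of_real t * dir N j)) \<in> M})"
        unfolding C_def by auto
      then show ?thesis using cvb by (simp add: closed_INT)
    qed
    have CJ: "b \<in> C J \<longleftrightarrow> J \<subseteq> JB b" if "J \<subseteq> {..<N}" for b J
      using that unfolding C_def JB_def fibre_def by auto
    define \<J> where "\<J> = {J. J \<subseteq> {..<N} \<and> (\<exists>O'. openin (top_of_set B) O' \<and> O' \<noteq> {} \<and> O' \<subseteq> V \<inter> C J)}"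
    have fin\<J>: "finite \<J>" by (rule finite_subset[of _ "Pow {..<N}"]) (auto simp: \<J>_def)
    have e\<J>: "{} \<in> \<J>" unfolding \<J>_def C_def using oV by auto
    define m where "m = Max (card ` \<J>)"
    have "m \<in> card ` \<J>" unfolding m_def using fin\<J> e\<J> by (intro Max_in) auto
    then obtain J0 where J0: "J0 \<in> \<J>" "card J0 = m" by auto
    have maxJ: "card J \<le> m" if "J \<in> \<J>" for J unfolding m_def using fin\<J> that by simp
    obtain O1 where O1: "openin (top_of_set B) O1" "O1 \<noteq> {}" "O1 \<subseteq> V \<inter> C J0" and J0N: "J0 \<subseteq> {..<N}"
      using J0(1) unfolding \<J>_def by blast
    have finJ0: "finite J0" using J0N finite_subset by blast
    define K where "K = (\<Union>j\<in>{..<N}-J0. C (insert j J0))"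
    have cK: "closed K" unfolding K_def using cC by (intro closed_UN) auto
    define O2 where "O2 = O1 - K"
    have oO2: "openin (top_of_set B) O2"
    proof -
      have "O1 \<subseteq> B" using O1(1) by (rule openin_imp_subset)
      then have "O2 = O1 \<inter> (B \<inter> - K)" unfolding O2_def by blast
      moreover have "openin (top_of_set B) (B \<inter> - K)" using cK by (intro openin_open_Int) auto
      ultimately show ?thesis using O1(1) by (simp add: openin_Int)
    qed
    have O2ne: "O2 \<noteq> {}"
    proof
      assume "O2 = {}"
      then have cov: "O1 \<subseteq> \<Union>((\<lambda>j. C (insert j J0)) ` ({..<N}-J0))" unfolding O2_def K_def by blast
      obtain C' O' where C': "C' \<in> (\<lambda>j. C (insert j J0)) ` ({..<N}-J0)" "openin (top_of_set B) O'"
        "O' \<noteq> {}" "O' \<subseteq> O1 \<inter> C'"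
        using finite_closed_cover[OF _ _ O1(1) O1(2) cov] cC by blast
      then obtain j where j: "j < N" "j \<notin> J0" "C' = C (insert j J0)" by auto
      have "insert j J0 \<in> \<J>" unfolding \<J>_def using j J0N C' O1(3) by blast
      then have "card (insert j J0) \<le> m" by (rule maxJ)
      moreover have "card (insert j J0) = m + 1" using finJ0 j J0(2) by simp
      ultimately show False by simp
    qed
    have JBeq: "JB b = J0" if b: "b \<in> O2" for b
    proof
      have bO1: "b \<in> O1" using b O2_def by auto
      then show "J0 \<subseteq> JB b" using O1(3) CJ[OF J0N] by auto
      show "JB b \<subseteq> J0"
      proof
        fix j assume j: "j \<in> JB b"
        show "j \<in> J0"
        proof (rule ccontr)
          assume jn: "j \<notin> J0"
          have "insert j J0 \<subseteq> JB b" using j \<open>J0 \<subseteq> JB b\<close> by auto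
          moreover have "insert j J0 \<subseteq> {..<N}" using j JBN J0N by auto
          ultimately have "b \<in> C (insert j J0)" using CJ by blast
          moreover have "j \<in> {..<N} - J0" using j JBN jn by auto
          ultimately have "b \<in> K" unfolding K_def by blast
          then show False using b O2_def by auto
        qed
      qed
    qed
    obtain W where W: "open_ball_in B W" "W \<subseteq> O2" using ball_inside[OF oO2 O2ne] by blast
    have WV: "W \<subseteq> V" using W O2_def O1 by auto
    obtain b0 where b0: "b0 \<in> W" using oball[OF W(1)] by blast
    have "3 \<le> card J0" using cardb[of b0] JBeq[of b0] b0 W WV by auto
    moreover have "(W \<times> S) \<inter> M = W \<times> (h' ` (\<Union>j\<in>J0. star_branch N j))"
    proof (rule set_eqI)
      fix p :: "'a \<times> 'g"
      obtain b y where p: "p = (b, y)" by (cases p)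
      show "p \<in> (W \<times> S) \<inter> M \<longleftrightarrow> p \<in> W \<times> (h' ` (\<Union>j\<in>J0. star_branch N j))"
      proof (cases "b \<in> W")
        case True
        then have "fibre M b \<inter> S = h' ` (\<Union>j\<in>J0. star_branch N j)"
          using decb[of b] JBeq[of b] W WV by auto
        then show ?thesis using True unfolding p fibre_def by auto
      next
        case False
        then show ?thesis unfolding p by auto
      qed
    qed
    ultimately show "\<exists>J W. J \<subseteq> {..<N} \<and> card J \<ge> 3 \<and> open_ball_in B W \<and> W \<subseteq> V \<and>
                 (W \<times> S) \<inter> M = W \<times> (h' ` (\<Union>j\<in>J. star_branch N j))"
      using J0N W(1) WV by blast
  qed
  obtain F where F: "finite F"
    "\<And>y. y \<in> \<Gamma> \<Longrightarrow> \<exists>S d (h :: 'g \<Rightarrow> complex) h'. openin (top_of_set \<Gamma>) S \<and> y \<in> S \<and> 1 \<le> d \<and>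
        homeomorphism S (open_star d) h h' \<and> h y = 0 \<and> (y \<notin> F \<longrightarrow> d \<le> 2)"
    using graph_local[OF assms(2)] by blast
  have ram_in: "ramification_point \<Gamma> y \<and> y \<in> F" if Z: "Z \<subseteq> \<Gamma>" "ramification_point Z y" for Z y
  proof -
    obtain r where r: "r \<ge> 3" "star_point Z r y" using Z(2) unfolding ramification_point_def by blast
    have yG: "y \<in> \<Gamma>" using Z unfolding ramification_point_def by auto
    obtain S d and h :: "'g \<Rightarrow> complex" and h' where Sd: "openin (top_of_set \<Gamma>) S" "y \<in> S" "1 \<le> d"
        "homeomorphism S (open_star d) h h'" "h y = 0" "y \<notin> F \<longrightarrow> d \<le> 2"
      using F(2)[OF yG] by blast
    have "r \<le> card {..<d}"
    proof (rule star_le[OF r(2) Z(1) Sd(1) Sd(4) Sd(2) Sd(5) Sd(3)])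
      show "{..<d} \<subseteq> {..<d}" by simp
      have "h ` (Z \<inter> S) \<subseteq> h ` S" by blast
      also have "\<dots> = open_star d" using Sd(4) unfolding homeomorphism_def by simp
      also have "\<dots> = (\<Union>j\<in>{..<d}. star_branch d j)" using open_star_Union[OF Sd(3)] by simp
      finally show "h ` (Z \<inter> S) \<subseteq> (\<Union>j\<in>{..<d}. star_branch d j)" .
    qed
    then have d3: "3 \<le> d" using r by simp
    have "star_point \<Gamma> d y" unfolding star_point_def using Sd by blast
    then have "ramification_point \<Gamma> y" unfolding ramification_point_def using d3 yG by blast
    moreover have "y \<in> F" using Sd(6) d3 by auto
    ultimately show ?thesis by blast
  qed
  have parta: "\<forall>U. open_ball_in B U \<and> U \<subseteq> R_B B M \<longrightarrow>
            (\<exists>V q. open_ball_in B V \<and> V \<subseteq> U \<and> ramification_point \<Gamma> q \<and> V \<times> {q} \<subseteq> R_E B \<Gamma> M)"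
  proof (intro allI impI, elim conjE)
    fix U assume U: "open_ball_in B U" "U \<subseteq> R_B B M"
    have oU: "openin (top_of_set B) U" "U \<noteq> {}" "U \<subseteq> B" using oball[OF U(1)] by auto
    define Q where "Q = {y. ramification_point \<Gamma> y}"
    have finQ: "finite Q" by (rule finite_subset[OF _ F(1)]) (use ram_in[OF subset_refl] in \<open>auto simp: Q_def\<close>)
    have "\<forall>q\<in>Q. \<exists>N. \<exists>S. \<exists>h :: 'g \<Rightarrow> complex. \<exists>h'. 3 \<le> N \<and> openin (top_of_set \<Gamma>) S \<and> q \<in> S \<and>
            homeomorphism S (open_star N) h h' \<and> h q = 0"
      unfolding Q_def ramification_point_def star_point_def by blast
    then obtain NN where "\<forall>q\<in>Q. \<exists>S. \<exists>h :: 'g \<Rightarrow> complex. \<exists>h'. 3 \<le> NN q \<and> openin (top_of_set \<Gamma>) S \<and> q \<in> S \<and>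
            homeomorphism S (open_star (NN q)) h h' \<and> h q = 0" by (metis (no_types))
    then obtain SS where "\<forall>q\<in>Q. \<exists>h :: 'g \<Rightarrow> complex. \<exists>h'. 3 \<le> NN q \<and> openin (top_of_set \<Gamma>) (SS q) \<and> q \<in> SS q \<and>
            homeomorphism (SS q) (open_star (NN q)) h h' \<and> h q = 0" by (metis (no_types))
    then obtain hh where "\<forall>q\<in>Q. \<exists>h'. 3 \<le> NN q \<and> openin (top_of_set \<Gamma>) (SS q) \<and> q \<in> SS q \<and>
            homeomorphism (SS q) (open_star (NN q)) (hh q :: 'g \<Rightarrow> complex) h' \<and> hh q q = 0" by (metis (no_types))
    then obtain hh' where st: "\<forall>q\<in>Q. 3 \<le> NN q \<and> openin (top_of_set \<Gamma>) (SS q) \<and> q \<in> SS q \<and>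
            homeomorphism (SS q) (open_star (NN q)) (hh q) (hh' q) \<and> hh q q = 0" by (metis (no_types))
    define JB where "JB q b = {j. j<NN q \<and> (\<forall>t. 0<t \<and> t<1 \<longrightarrow> hh' q (of_real t * dir (NN q) j) \<in> fibre M b)}" for q b
    have JBN: "JB q b \<subseteq> {..<NN q}" for q b unfolding JB_def by auto
    have decq: "fibre M b \<inter> SS q = hh' q ` (\<Union>j\<in>JB q b. star_branch (NN q) j)"
      if qb: "q \<in> Q" "b \<in> B" "q \<in> fibre M b" for q b
    proof -
      have s: "3 \<le> NN q" "openin (top_of_set \<Gamma>) (SS q)" "q \<in> SS q"
            "homeomorphism (SS q) (open_star (NN q)) (hh q) (hh' q)" "hh q q = 0" using st qb(1) by auto
      have N1: "1 \<le> NN q" using s(1) by simp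
      show ?thesis unfolding JB_def
        by (rule dec[OF fclosed fsub noend s(2) s(4) N1 s(3) s(5) qb(3)]) (use qb in auto)
    qed
    define C where "C q J = {b. (b, q) \<in> M \<and> (\<forall>j\<in>J. \<forall>t. 0<t \<and> t<1 \<longrightarrow> (b, hh' q (of_real t * dir (NN q) j)) \<in> M)}" for q J
    have cC: "closed (C q J)" for q J
    proof -
      have "C q J = {b. (b, q) \<in> M} \<inter> (\<Inter>j\<in>J. \<Inter>t\<in>{0<..<1::real}. {b. (b, hh' q (of_real t * dir (NN q) j)) \<in> M})"
        unfolding C_def by auto
      then show ?thesis using cvb by (simp add: closed_INT closed_Int)
    qed
    define I where "I = {(q, J). q \<in> Q \<and> J \<subseteq> {..<NN q} \<and> 3 \<le> card J}"
    have finI: "finite I"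
      by (rule finite_subset[of _ "Sigma Q (\<lambda>q. Pow {..<NN q})"]) (use finQ in \<open>auto simp: I_def\<close>)
    define \<C> where "\<C> = (\<lambda>(q, J). C q J) ` I"
    have cov: "U \<subseteq> \<Union>\<C>"
    proof
      fix b assume b: "b \<in> U"
      then obtain y where bB: "b \<in> B" and y: "ramification_point (fibre M b) y"
        using U(2) unfolding R_B_def by auto
      have yQ: "y \<in> Q" using ram_in[OF fsub y] Q_def by auto
      have yf: "y \<in> fibre M b" using y unfolding ramification_point_def by simp
      have s: "3 \<le> NN y" "openin (top_of_set \<Gamma>) (SS y)" "y \<in> SS y"
            "homeomorphism (SS y) (open_star (NN y)) (hh y) (hh' y)" "hh y y = 0" using st yQ by auto
      have N1: "1 \<le> NN y" using s(1) by simp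
      obtain r where r: "r \<ge> 3" "star_point (fibre M b) r y" using y unfolding ramification_point_def by blast
      have XN: "(\<Union>j\<in>JB y b. star_branch (NN y) j) \<subseteq> open_star (NN y)" using branch_sub JBN by blast
      have "r \<le> card (JB y b)"
      proof (rule star_le[OF r(2) fsub s(2) s(4) s(3) s(5) N1 JBN])
        show "hh y ` (fibre M b \<inter> SS y) \<subseteq> (\<Union>j\<in>JB y b. star_branch (NN y) j)"
          unfolding decq[OF yQ bB yf] by (rule image_hh'[OF s(4) XN])
      qed
      then have "(y, JB y b) \<in> I" unfolding I_def using yQ JBN r by auto
      moreover have "b \<in> C y (JB y b)" unfolding C_def JB_def using yf by (auto simp: fibre_def)
      ultimately show "b \<in> \<Union>\<C>" unfolding \<C>_def by force
    qed
    have fC: "finite \<C>" unfolding \<C>_def using finI by simp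
    have cCC: "\<forall>C'\<in>\<C>. closed C'" unfolding \<C>_def using cC by auto
    obtain C' O' where C': "C' \<in> \<C>" "openin (top_of_set B) O'" "O' \<noteq> {}" "O' \<subseteq> U \<inter> C'"
      using finite_closed_cover[OF fC cCC oU(1) oU(2) cov] by blast
    then obtain q J where qJ: "(q, J) \<in> I" "C' = C q J" unfolding \<C>_def by auto
    have qQ: "q \<in> Q" and JN: "J \<subseteq> {..<NN q}" and J3: "3 \<le> card J" using qJ(1) I_def by auto
    have s: "3 \<le> NN q" "openin (top_of_set \<Gamma>) (SS q)" "q \<in> SS q"
          "homeomorphism (SS q) (open_star (NN q)) (hh q) (hh' q)" "hh q q = 0" using st qQ by auto
    obtain V where V: "open_ball_in B V" "V \<subseteq> O'" using ball_inside[OF C'(2,3)] by blast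
    have qG: "q \<in> \<Gamma>" and rq: "ramification_point \<Gamma> q" using qQ Q_def ramification_point_def by auto
    have "V \<times> {q} \<subseteq> R_E B \<Gamma> M"
    proof clarify
      fix b assume bV: "b \<in> V"
      have bU: "b \<in> U" "b \<in> C q J" using bV V C' qJ by auto
      have bB: "b \<in> B" using bU oU by auto
      have qf: "q \<in> fibre M b" using bU(2) unfolding C_def fibre_def by auto
      have JJ: "J \<subseteq> JB q b" using bU(2) JN unfolding C_def JB_def fibre_def by auto
      have "finite (JB q b)" using JBN finite_subset by blast
      then have "3 \<le> card (JB q b)" using card_mono[OF _ JJ] J3 by simp
      then have "ramification_point (fibre M b) q"
        using ram_of_card[OF decq[OF qQ bB qf] JBN _ s(2) s(4) s(3) s(5) fsub qf] by blast
      then show "(b, q) \<in> R_E B \<Gamma> M" unfolding R_E_def using bB qG by auto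
    qed
    then show "\<exists>V q. open_ball_in B V \<and> V \<subseteq> U \<and> ramification_point \<Gamma> q \<and> V \<times> {q} \<subseteq> R_E B \<Gamma> M"
      using V C' rq by blast
  qed
  show ?thesis using parta partb by blast
qed

end
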